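(* Let $G$ be an open subgroup of a Cartan subgroup $C$ of $\mathrm{GL}_2(\mathbb{Z}_\ell)$ and let $n_0$ be the level of $G$. Then for all integers $a\geq n_0$ and $b\geq0$ we have $\mu_{a,b}=\ell^{-2(a-n_0)}\mu_{n_0,b}$.
   Context: Let $\ell$ be a prime. A Cartan subgroup of $\mathrm{GL}_2(\mathbb{Z}_\ell)$ is the unit group $R^\times$ of a quadratic ring $R$ over $\mathbb{Z}_\ell$ (a subring, containing $1$, of a reduced degree-2 $\mathbb{Q}_\ell$-algebra $F$, finitely generated as a $\mathbb{Z}_\ell$-module, with $\mathbb{Q}_\ell R=F$), embedded via its left-multiplication action on $R$ in a $\mathbb{Z}_\ell$-basis. For $X\subseteq\mathrm{GL}_2(\mathbb{Z}_\ell)$, $X(n)$ is its image in $\mathrm{GL}_2(\mathbb{Z}/\ell^n\mathbb{Z})$. The level $n_0$ of $G$ is the smallest positive integer $n$ with $[C(n):G(n)]=[C:G]$. Identify $M\in\mathrm{GL}_2(\mathbb{Z}_\ell)$ with an automorphism of $\varinjlim_n(\mathbb{Z}/\ell^n\mathbb{Z})^2$; $\mathcal{M}_{a,b}=\{M\in G:\ \ker(M-I)\cong\mathbb{Z}/\ell^a\mathbb{Z}\times\mathbb{Z}/\ell^{a+b}\mathbb{Z}\}$ and $\mu_{a,b}$ is its measure for the Haar measure of $G$ normalized to total mass $1$. *)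

theory Defs
  imports "HOL-Algebra.Elementary_Groups" "HOL-Probability.Probability"
begin

text \<open>A 2x2 integer matrix [[a,b],[c,d]] is stored as the quadruple (a,b,c,d).
  An element of M_2(Z_l) is stored as the compatible sequence of its reductions
  modulo l^n (entries normalised to {0..<l^n}).\<close>

type_synonym mat4 = "int \<times> int \<times> int \<times> int"
type_synonym ladic_mat = "nat \<Rightarrow> mat4"

definition mmod :: "int \<Rightarrow> mat4 \<Rightarrow> mat4" where
  "mmod m = (\<lambda>(a, b, c, d). (a mod m, b mod m, c mod m, d mod m))"

definition mmul :: "mat4 \<Rightarrow> mat4 \<Rightarrow> mat4" where
  "mmul = (\<lambda>(a, b, c, d) (e, f, g, h). (a*e + b*g, a*f + b*h, c*e + d*g, c*f + d*h))"

definition Zl :: "nat \<Rightarrow> (nat \<Rightarrow> int) set" where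
  "Zl l = {x. \<forall>n. x n = x (Suc n) mod (int l ^ n)}"

definition Zl_mats :: "nat \<Rightarrow> ladic_mat set" where
  "Zl_mats l = {M. \<forall>n. M n = mmod (int l ^ n) (M (Suc n))}"

definition lmult :: "nat \<Rightarrow> ladic_mat \<Rightarrow> ladic_mat \<Rightarrow> ladic_mat" where
  "lmult l M N = (\<lambda>n. mmod (int l ^ n) (mmul (M n) (N n)))"

definition lone :: "nat \<Rightarrow> ladic_mat" where
  "lone l = (\<lambda>n. mmod (int l ^ n) (1, 0, 0, 1))"

definition GL2 :: "nat \<Rightarrow> ladic_mat set" where
  "GL2 l = {M \<in> Zl_mats l. \<exists>N \<in> Zl_mats l. lmult l M N = lone l \<and> lmult l N M = lone l}"

text \<open>Matrix of left multiplication by x + y*w on the quadratic ring Z_l[w],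
  w^2 = t w - d, in the basis (1, w).\<close>
definition quad_elt ::
  "nat \<Rightarrow> (nat \<Rightarrow> int) \<Rightarrow> (nat \<Rightarrow> int) \<Rightarrow> (nat \<Rightarrow> int) \<Rightarrow> (nat \<Rightarrow> int) \<Rightarrow> ladic_mat" where
  "quad_elt l t d x y = (\<lambda>n. mmod (int l ^ n) (x n, - (d n * y n), y n, x n + t n * y n))"

text \<open>Cartan subgroup: unit group R^x of a quadratic ring R = Z_l[w] (w^2 = t w - d,
  reduced: t^2 - 4d \<noteq> 0 in Z_l) acting on R by left multiplication, written in an arbitrary
  Z_l-basis of R (change of basis P from the basis (1,w)).\<close>
definition cartan :: "nat \<Rightarrow> ladic_mat set \<Rightarrow> bool" where
  "cartan l C \<longleftrightarrow>
     (\<exists>t \<in> Zl l. \<exists>d \<in> Zl l. (\<exists>n. (t n ^ 2 - 4 * d n) mod (int l ^ n) \<noteq> 0) \<and>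
       (\<exists>P \<in> GL2 l. C = {M \<in> GL2 l. \<exists>x \<in> Zl l. \<exists>y \<in> Zl l.
                              lmult l P M = lmult l (quad_elt l t d x y) P}))"

definition is_subgroup :: "nat \<Rightarrow> ladic_mat set \<Rightarrow> ladic_mat set \<Rightarrow> bool" where
  "is_subgroup l G C \<longleftrightarrow> G \<subseteq> C \<and> lone l \<in> G \<and>
     (\<forall>M \<in> G. \<forall>N \<in> G. lmult l M N \<in> G) \<and>
     (\<forall>M \<in> G. \<exists>N \<in> G. lmult l M N = lone l \<and> lmult l N M = lone l)"

definition open_in_ladic :: "ladic_mat set \<Rightarrow> ladic_mat set \<Rightarrow> bool" where
  "open_in_ladic G C \<longleftrightarrow> (\<forall>M \<in> G. \<exists>n. \<forall>N \<in> C. N n = M n \<longrightarrow> N \<in> G)"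

definition red :: "ladic_mat set \<Rightarrow> nat \<Rightarrow> mat4 set" where
  "red X n = (\<lambda>M. M n) ` X"

definition ladic_index :: "nat \<Rightarrow> ladic_mat set \<Rightarrow> ladic_mat set \<Rightarrow> nat" where
  "ladic_index l C G = card {(\<lambda>N. lmult l M N) ` G | M. M \<in> C}"

definition level_index :: "nat \<Rightarrow> nat \<Rightarrow> ladic_mat set \<Rightarrow> ladic_mat set \<Rightarrow> nat" where
  "level_index l n C G =
     card {(\<lambda>B. mmod (int l ^ n) (mmul A B)) ` red G n | A. A \<in> red C n}"

definition level :: "nat \<Rightarrow> ladic_mat set \<Rightarrow> ladic_mat set \<Rightarrow> nat" where
  "level l C G = (LEAST n. 0 < n \<and> level_index l n C G = ladic_index l C G)"

text \<open>ker(M - I) on lim_n (Z/l^n Z)^2, identified with (Z[1/l]/Z)^2 (transition maps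
  multiplication by l; w at level k corresponds to w / l^k), elements represented by
  pairs of rationals in [0,1).\<close>
definition ker_set :: "nat \<Rightarrow> ladic_mat \<Rightarrow> (rat \<times> rat) set" where
  "ker_set l M = {(frac (of_int w1 / of_int (int l ^ k)), frac (of_int w2 / of_int (int l ^ k))) | k w1 w2.
      (case M k of (a, b, c, d) \<Rightarrow>
         ((a - 1) * w1 + b * w2) mod (int l ^ k) = 0 \<and> (c * w1 + (d - 1) * w2) mod (int l ^ k) = 0)}"

definition ker_group :: "nat \<Rightarrow> ladic_mat \<Rightarrow> (rat \<times> rat) monoid" where
  "ker_group l M = \<lparr>carrier = ker_set l M,
                     monoid.mult = (\<lambda>(x, y) (x', y'). (frac (x + x'), frac (y + y'))),
                     one = (0, 0)\<rparr>"

definition Mab :: "nat \<Rightarrow> ladic_mat set \<Rightarrow> nat \<Rightarrow> nat \<Rightarrow> ladic_mat set" where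
  "Mab l G a b = {M \<in> G. ker_group l M \<cong> (integer_mod_group (l ^ a) \<times>\<times> integer_mod_group (l ^ (a + b)))}"

text \<open>Haar probability measure on G: a left-invariant probability measure on the Borel
  sigma-algebra of G (generated by the basic open sets {M in G. M n = A}).\<close>
definition haar_prob :: "nat \<Rightarrow> ladic_mat set \<Rightarrow> ladic_mat measure \<Rightarrow> bool" where
  "haar_prob l G \<mu> \<longleftrightarrow> space \<mu> = G \<and>
     sets \<mu> = sigma_sets G {{M \<in> G. M n = A} | n A. True} \<and>
     prob_space \<mu> \<and>
     (\<forall>g \<in> G. \<forall>A \<in> sets \<mu>. emeasure \<mu> ((\<lambda>M. lmult l g M) ` A) = emeasure \<mu> A)"

end

theory Submission
  imports Defs "HOL-Number_Theory.Number_Theory"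
begin


lemma mmod_simp: "mmod m (a,b,c,d) = (a mod m, b mod m, c mod m, d mod m)"
  by (simp add: mmod_def)
lemma mmul_simp: "mmul (a,b,c,d) (e,f,g,h) = (a*e + b*g, a*f + b*h, c*e + d*g, c*f + d*h)"
  by (simp add: mmul_def)

lemma mmod_mmod[simp]: "mmod m (mmod m A) = mmod m A"
  by (cases A) (auto simp: mmod_simp)

lemma mmod_dvd: "k dvd m \<Longrightarrow> mmod k (mmod m A) = mmod k A"
  by (cases A) (simp add: mmod_simp mod_mod_cancel)

lemma mmul_assoc: "mmul (mmul A B) D = mmul A (mmul B D)"
  by (cases A; cases B; cases D) (simp add: mmul_simp algebra_simps)

lemma mmul_I_left[simp]: "mmul (1,0,0,1) A = A"
  by (cases A) (simp add: mmul_simp)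
lemma mmul_I_right[simp]: "mmul A (1,0,0,1) = A"
  by (cases A) (simp add: mmul_simp)

lemma modl2: "((a::int) mod m * b + c mod m * d) mod m = (a*b + c*d) mod m"
  by (metis mod_add_cong mod_mult_left_eq)
lemma modr2: "((a::int) * (b mod m) + c * (d mod m)) mod m = (a*b + c*d) mod m"
  by (metis mod_add_cong mod_mult_right_eq)
lemma mmod_mmul_left: "mmod m (mmul (mmod m A) B) = mmod m (mmul A B)"
  by (cases A; cases B) (simp add: mmul_simp mmod_simp modl2)
lemma mmod_mmul_right: "mmod m (mmul A (mmod m B)) = mmod m (mmul A B)"
  by (cases A; cases B) (simp add: mmul_simp mmod_simp modr2)

lemma Zl_matsD: "M \<in> Zl_mats l \<Longrightarrow> M n = mmod (int l ^ n) (M (Suc n))"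
  unfolding Zl_mats_def by blast

lemma Zl_mats_norm: "M \<in> Zl_mats l \<Longrightarrow> mmod (int l ^ n) (M n) = M n"
proof -
  assume M: "M \<in> Zl_mats l"
  have "M n = mmod (int l ^ n) (M (Suc n))" by (rule Zl_matsD[OF M])
  then show ?thesis by (metis mmod_mmod)
qed

lemma Zl_mats_le: assumes "M \<in> Zl_mats l" "n \<le> k" shows "M n = mmod (int l ^ n) (M k)"
  using assms(2)
proof (induction k rule: dec_induct)
  case base then show ?case using Zl_mats_norm[OF assms(1)] by simp
next
  case (step k)
  have "M n = mmod (int l ^ n) (mmod (int l ^ k) (M (Suc k)))" using step Zl_matsD[OF assms(1), of k] by simp
  also have "\<dots> = mmod (int l ^ n) (M (Suc k))" by (rule mmod_dvd) (simp add: le_imp_power_dvd step)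
  finally show ?case .
qed

definition Mon :: "nat \<Rightarrow> ladic_mat monoid" where
  "Mon l = \<lparr>carrier = Zl_mats l, monoid.mult = lmult l, one = lone l\<rparr>"

lemma Mon_simps[simp]: "carrier (Mon l) = Zl_mats l" "monoid.mult (Mon l) = lmult l" "one (Mon l) = lone l"
  by (simp_all add: Mon_def)

lemma pow_dvd_Suc: "(int l ^ n) dvd (int l ^ Suc n)"
  by simp

lemma lmult_closed: assumes "M \<in> Zl_mats l" "N \<in> Zl_mats l" shows "lmult l M N \<in> Zl_mats l"
  unfolding Zl_mats_def lmult_def
proof (intro CollectI allI)
  fix n
  have "mmod (int l ^ n) (mmul (M n) (N n)) = mmod (int l ^ n) (mmul (mmod (int l ^ n) (M (Suc n))) (mmod (int l ^ n) (N (Suc n))))"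
    using Zl_matsD[OF assms(1), of n] Zl_matsD[OF assms(2), of n] by simp
  also have "\<dots> = mmod (int l ^ n) (mmul (M (Suc n)) (N (Suc n)))"
    by (simp add: mmod_mmul_left mmod_mmul_right)
  also have "\<dots> = mmod (int l ^ n) (mmod (int l ^ Suc n) (mmul (M (Suc n)) (N (Suc n))))"
    by (rule mmod_dvd[OF pow_dvd_Suc, symmetric])
  finally show "mmod (int l ^ n) (mmul (M n) (N n)) = mmod (int l ^ n) (mmod (int l ^ Suc n) (mmul (M (Suc n)) (N (Suc n))))" .
qed

lemma lone_closed: "lone l \<in> Zl_mats l"
  unfolding Zl_mats_def lone_def
proof (intro CollectI allI)
  fix n show "mmod (int l ^ n) (1, 0, 0, 1) = mmod (int l ^ n) (mmod (int l ^ Suc n) (1, 0, 0, 1))"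
    by (rule mmod_dvd[OF pow_dvd_Suc, symmetric])
qed

lemma lmult_assoc: "lmult l (lmult l M N) K = lmult l M (lmult l N K)"
  unfolding lmult_def
  by (simp add: mmod_mmul_left mmod_mmul_right mmul_assoc)

lemma lone_left: "M \<in> Zl_mats l \<Longrightarrow> lmult l (lone l) M = M"
  unfolding lmult_def lone_def
  by (simp add: mmod_mmul_left Zl_mats_norm)

lemma lone_right: "M \<in> Zl_mats l \<Longrightarrow> lmult l M (lone l) = M"
  unfolding lmult_def lone_def
  by (simp add: mmod_mmul_right Zl_mats_norm)

lemma monoid_Mon: "monoid (Mon l)"
  apply (rule monoidI)
  apply (simp_all add: lmult_closed lone_closed lmult_assoc lone_left lone_right)
  done

lemma GL2_Units: "GL2 l = Units (Mon l)"
  unfolding GL2_def Units_def Mon_simps by blast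



definition det4 :: "mat4 \<Rightarrow> int" where "det4 = (\<lambda>(a,b,c,d). a*d - b*c)"
definition adj4 :: "mat4 \<Rightarrow> mat4" where "adj4 = (\<lambda>(a,b,c,d). (d, -b, -c, a))"
definition msc :: "int \<Rightarrow> mat4 \<Rightarrow> mat4" where "msc k = (\<lambda>(a,b,c,d). (k*a, k*b, k*c, k*d))"

lemma mmod_eq_iff: "mmod m (a,b,c,d) = mmod m (a',b',c',d') \<longleftrightarrow>
   [a = a'] (mod m) \<and> [b = b'] (mod m) \<and> [c = c'] (mod m) \<and> [d = d'] (mod m)"
  by (simp add: mmod_simp cong_def)

lemma det4_mmod: "[det4 (mmod m A) = det4 A] (mod m)"
proof (cases A)
  case (fields a b c d)
  have h: "[(x::int) mod m = x] (mod m)" for x by (simp add: cong_def)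
  show ?thesis unfolding fields det4_def mmod_simp
    by (simp add: cong_diff cong_mult h)
qed

lemma det4_cong: "mmod m A = mmod m B \<Longrightarrow> [det4 A = det4 B] (mod m)"
  by (metis det4_mmod cong_sym cong_trans)

lemma mmul_adj: "mmul A (adj4 A) = (det4 A, 0, 0, det4 A)"
  by (cases A) (simp add: mmul_simp adj4_def det4_def)
lemma mmul_adj': "mmul (adj4 A) A = (det4 A, 0, 0, det4 A)"
  by (cases A) (simp add: mmul_simp adj4_def det4_def algebra_simps)

lemma mmul_msc_right: "mmul A (msc k B) = msc k (mmul A B)"
  by (cases A; cases B) (simp add: mmul_simp msc_def algebra_simps)
lemma mmul_msc_left: "mmul (msc k A) B = msc k (mmul A B)"
  by (cases A; cases B) (simp add: mmul_simp msc_def algebra_simps)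

lemma mmul_adj_msc: "mmul A (msc u (adj4 A)) = (u * det4 A, 0, 0, u * det4 A)"
  by (cases A) (simp add: mmul_simp adj4_def det4_def msc_def algebra_simps)
lemma mmul_adj_msc': "mmul (msc u (adj4 A)) A = (u * det4 A, 0, 0, u * det4 A)"
  by (cases A) (simp add: mmul_simp adj4_def det4_def msc_def algebra_simps)

lemma msc_adj_cong: assumes "[u = u'] (mod m)" "mmod m A = mmod m B"
  shows "mmod m (msc u (adj4 A)) = mmod m (msc u' (adj4 B))"
proof (cases A; cases B)
  fix a b c d a' b' c' d' assume A: "A = (a,b,c,d)" and B: "B = (a',b',c',d')"
  from assms(2) have "[a = a'] (mod m)" "[b = b'] (mod m)" "[c = c'] (mod m)" "[d = d'] (mod m)"
    unfolding A B mmod_eq_iff by auto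
  then show ?thesis unfolding A B
    using assms(1) apply (simp add: msc_def adj4_def)
    apply (subst mmod_eq_iff)
    by (auto intro!: cong_mult simp: cong_minus_minus_iff)
qed

lemma lone_simp: "lone l n = mmod (int l ^ n) (1,0,0,1)" by (simp add: lone_def)

lemma GL2_of_coprime:
  assumes l: "prime l" and M: "M \<in> Zl_mats l" and cop: "coprime (det4 (M 1)) (int l)"
  shows "M \<in> GL2 l"
proof -
  have copn: "coprime (det4 (M n)) (int l ^ n)" for n
  proof (cases "n = 0")
    case True then show ?thesis by simp
  next
    case False
    have "M 1 = mmod (int l ^ 1) (M n)" using Zl_mats_le[OF M, of 1 n] False by simp
    then have "[det4 (M 1) = det4 (M n)] (mod int l)"
      using det4_mmod[of "int l" "M n"] by simp
    then have "coprime (det4 (M n)) (int l)" using cop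
      by (metis cong_imp_coprime)
    then show ?thesis by simp
  qed
  define u where "u n = (SOME v. [det4 (M n) * v = 1] (mod int l ^ n))" for n
  have u: "[det4 (M n) * u n = 1] (mod int l ^ n)" for n
    unfolding u_def by (rule someI_ex) (rule cong_solve_coprime_int[OF copn])
  define N where "N n = mmod (int l ^ n) (msc (u n) (adj4 (M n)))" for n
  have ucong: "[u (Suc n) = u n] (mod int l ^ n)" for n
  proof -
    have "[det4 (M (Suc n)) * u (Suc n) = 1] (mod int l ^ n)"
      using u[of "Suc n"] by (rule cong_dvd_modulus) simp
    moreover have "[det4 (M (Suc n)) = det4 (M n)] (mod int l ^ n)"
      using det4_cong[of "int l ^ n" "M (Suc n)" "M n"] Zl_matsD[OF M, of n] by (simp add: cong_sym)
    ultimately have "[det4 (M n) * u (Suc n) = 1] (mod int l ^ n)"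
      by (metis cong_mult cong_refl cong_sym cong_trans)
    then have "[det4 (M n) * u (Suc n) = det4 (M n) * u n] (mod int l ^ n)"
      using u[of n] by (metis cong_sym cong_trans)
    then show ?thesis using copn[of n] cong_mult_lcancel by blast
  qed
  have NZ: "N \<in> Zl_mats l"
    unfolding Zl_mats_def
  proof (intro CollectI allI)
    fix n
    have "mmod (int l ^ n) (N (Suc n)) = mmod (int l ^ n) (msc (u (Suc n)) (adj4 (M (Suc n))))"
      unfolding N_def by (rule mmod_dvd) simp
    also have "\<dots> = mmod (int l ^ n) (msc (u n) (adj4 (M n)))"
      by (rule msc_adj_cong[OF ucong]) (simp add: Zl_matsD[OF M, of n])
    finally show "N n = mmod (int l ^ n) (N (Suc n))" unfolding N_def by simp
  qed
  have "lmult l M N = lone l"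
  proof
    fix n
    have "lmult l M N n = mmod (int l ^ n) (mmul (M n) (msc (u n) (adj4 (M n))))"
      unfolding lmult_def N_def by (simp add: mmod_mmul_right)
    also have "\<dots> = mmod (int l ^ n) (1,0,0,1)"
      using u[of n] unfolding mmul_adj_msc mmod_eq_iff by (simp add: mult.commute cong_refl)
    finally show "lmult l M N n = lone l n" by (simp add: lone_simp)
  qed
  moreover have "lmult l N M = lone l"
  proof
    fix n
    have "lmult l N M n = mmod (int l ^ n) (mmul (msc (u n) (adj4 (M n))) (M n))"
      unfolding lmult_def N_def by (simp add: mmod_mmul_left)
    also have "\<dots> = mmod (int l ^ n) (1,0,0,1)"
      using u[of n] unfolding mmul_adj_msc' mmod_eq_iff by (simp add: mult.commute cong_refl)
    finally show "lmult l N M n = lone l n" by (simp add: lone_simp)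
  qed
  ultimately show ?thesis unfolding GL2_def using M NZ by blast
qed



lemma monoid_comm_inv:
  fixes G (structure)
  assumes "monoid G" "x \<in> carrier G" "y \<in> carrier G" "w \<in> carrier G"
    "x \<otimes>\<^bsub>G\<^esub> y = \<one>\<^bsub>G\<^esub>" "y \<otimes>\<^bsub>G\<^esub> x = \<one>\<^bsub>G\<^esub>" "x \<otimes>\<^bsub>G\<^esub> w = w \<otimes>\<^bsub>G\<^esub> x"
  shows "y \<otimes>\<^bsub>G\<^esub> w = w \<otimes>\<^bsub>G\<^esub> y"
proof -
  interpret monoid G by fact
  have "y \<otimes> w = y \<otimes> w \<otimes> (x \<otimes> y)" using assms(2-5) by simp
  also have "\<dots> = y \<otimes> (w \<otimes> x) \<otimes> y" using assms(2-4) by (simp add: m_assoc)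
  also have "\<dots> = y \<otimes> (x \<otimes> w) \<otimes> y" using assms(7) by simp
  also have "\<dots> = (y \<otimes> x) \<otimes> w \<otimes> y" using assms(2-4) by (simp add: m_assoc)
  also have "\<dots> = w \<otimes> y" using assms(2-4,6) by simp
  finally show ?thesis .
qed

definition zseq :: "nat \<Rightarrow> int \<Rightarrow> nat \<Rightarrow> int" where
  "zseq l c = (\<lambda>n. c mod (int l ^ n))"

lemma zseq_Zl: "zseq l c \<in> Zl l"
  unfolding Zl_def zseq_def by (simp add: mod_mod_cancel)

lemma ZlD: "x \<in> Zl l \<Longrightarrow> x n = x (Suc n) mod (int l ^ n)"
  unfolding Zl_def by blast

lemma Zl_norm: "x \<in> Zl l \<Longrightarrow> x n mod (int l ^ n) = x n"
  by (metis ZlD mod_mod_trivial)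

lemma Zl_cong: "x \<in> Zl l \<Longrightarrow> [x (Suc n) = x n] (mod (int l ^ n))"
  using ZlD[of x l n] by (simp add: cong_def)

lemma quad_Zl: assumes "t \<in> Zl l" "d \<in> Zl l" "x \<in> Zl l" "y \<in> Zl l"
  shows "quad_elt l t d x y \<in> Zl_mats l"
  unfolding Zl_mats_def
proof (intro CollectI allI)
  fix n
  note c = Zl_cong[OF assms(1), of n] Zl_cong[OF assms(2), of n] Zl_cong[OF assms(3), of n] Zl_cong[OF assms(4), of n]
  have "mmod (int l ^ n) (quad_elt l t d x y (Suc n)) =
        mmod (int l ^ n) (x (Suc n), - (d (Suc n) * y (Suc n)), y (Suc n), x (Suc n) + t (Suc n) * y (Suc n))"
    unfolding quad_elt_def by (rule mmod_dvd) simp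
  also have "\<dots> = mmod (int l ^ n) (x n, - (d n * y n), y n, x n + t n * y n)"
    unfolding mmod_eq_iff using c by (auto intro!: cong_add cong_mult simp: cong_minus_minus_iff)
  finally show "quad_elt l t d x y n = mmod (int l ^ n) (quad_elt l t d x y (Suc n))"
    by (simp add: quad_elt_def)
qed

lemma Zl_of_mat: assumes "X \<in> Zl_mats l"
  shows "(\<lambda>n. fst (X n)) \<in> Zl l" "(\<lambda>n. fst (snd (snd (X n)))) \<in> Zl l"
proof -
  have *: "fst (X n) = fst (X (Suc n)) mod int l ^ n \<and> fst (snd (snd (X n))) = fst (snd (snd (X (Suc n)))) mod int l ^ n" for n
  proof -
    have "X n = mmod (int l ^ n) (X (Suc n))" by (rule Zl_matsD[OF assms])
    then show ?thesis by (cases "X (Suc n)") (simp add: mmod_simp)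
  qed
  show "(\<lambda>n. fst (X n)) \<in> Zl l" "(\<lambda>n. fst (snd (snd (X n)))) \<in> Zl l"
    unfolding Zl_def mem_Collect_eq using * by blast+
qed

locale cset =
  fixes l :: nat and t d :: "nat \<Rightarrow> int" and P :: ladic_mat and C G :: "ladic_mat set"
    and \<mu> :: "ladic_mat measure"
  assumes prime: "prime l" and t: "t \<in> Zl l" and d: "d \<in> Zl l" and P: "P \<in> GL2 l"
    and C_def: "C = {M \<in> GL2 l. \<exists>x \<in> Zl l. \<exists>y \<in> Zl l.
                              lmult l P M = lmult l (quad_elt l t d x y) P}"
    and sub: "is_subgroup l G C" and opn: "open_in_ladic G C" and haar: "haar_prob l G \<mu>"
begin

interpretation Mo: monoid "Mon l" by (rule monoid_Mon)

abbreviation "L \<equiv> int l"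

lemma l2: "l \<ge> 2" using prime by (simp add: prime_ge_2_nat)

definition Pinv where "Pinv = inv\<^bsub>Mon l\<^esub> P"
definition W where "W = quad_elt l t d (zseq l 0) (zseq l 1)"

lemma P_Z: "P \<in> Zl_mats l" using P unfolding GL2_def by blast
lemma Pinv_prop: "Pinv \<in> Zl_mats l" "lmult l P Pinv = lone l" "lmult l Pinv P = lone l" "Pinv \<in> GL2 l"
proof -
  have U: "P \<in> Units (Mon l)" using P by (simp add: GL2_Units)
  show "Pinv \<in> Zl_mats l" using Mo.Units_inv_closed[OF U] unfolding Pinv_def by simp
  show "lmult l P Pinv = lone l" using Mo.Units_r_inv[OF U] unfolding Pinv_def by simp
  show "lmult l Pinv P = lone l" using Mo.Units_l_inv[OF U] unfolding Pinv_def by simp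
  show "Pinv \<in> GL2 l" using Mo.Units_inv_Units[OF U] unfolding Pinv_def GL2_Units by simp
qed

lemma W_Z: "W \<in> Zl_mats l" unfolding W_def by (rule quad_Zl[OF t d zseq_Zl zseq_Zl])

definition conj where "conj M = lmult l (lmult l P M) Pinv"

lemma GL2_Z: "M \<in> GL2 l \<Longrightarrow> M \<in> Zl_mats l" unfolding GL2_def by blast

lemma quad_comm_W: assumes "x \<in> Zl l" "y \<in> Zl l"
  shows "lmult l (quad_elt l t d x y) W = lmult l W (quad_elt l t d x y)"
proof
  fix n
  show "lmult l (quad_elt l t d x y) W n = lmult l W (quad_elt l t d x y) n"
    unfolding lmult_def quad_elt_def W_def zseq_def
    by (simp add: mmod_mmul_left mmod_mmul_right del: mmod_mmod)
       (simp add: mmul_simp mmod_simp algebra_simps mod_simps)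
qed

end


lemma GL2_inv: assumes "M \<in> GL2 l" obtains N where "N \<in> GL2 l" "lmult l M N = lone l" "lmult l N M = lone l"
proof -
  interpret Mo: monoid "Mon l" by (rule monoid_Mon)
  have U: "M \<in> Units (Mon l)" using assms by (simp add: GL2_Units)
  show ?thesis
    apply (rule that[of "inv\<^bsub>Mon l\<^esub> M"])
    using Mo.Units_inv_Units[OF U] Mo.Units_r_inv[OF U] Mo.Units_l_inv[OF U] by (simp_all add: GL2_Units)
qed

lemma GL2_mult: "M \<in> GL2 l \<Longrightarrow> N \<in> GL2 l \<Longrightarrow> lmult l M N \<in> GL2 l"
proof -
  interpret Mo: monoid "Mon l" by (rule monoid_Mon)
  show "M \<in> GL2 l \<Longrightarrow> N \<in> GL2 l \<Longrightarrow> lmult l M N \<in> GL2 l"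
    unfolding GL2_Units using Mo.Units_m_closed[of M N] by simp
qed

lemma lone_GL2: "lone l \<in> GL2 l"
  unfolding GL2_def using lone_closed lone_left[OF lone_closed] by blast

lemma inv_unique: assumes "M \<in> Zl_mats l" "N \<in> Zl_mats l" "N' \<in> Zl_mats l"
  "lmult l N M = lone l" "lmult l M N' = lone l" shows "N = N'"
proof -
  have "N = lmult l N (lmult l M N')" using assms by (simp add: lone_right)
  also have "\<dots> = lmult l (lmult l N M) N'" by (simp add: lmult_assoc)
  also have "\<dots> = N'" using assms by (simp add: lone_left)
  finally show ?thesis .
qed

context cset begin

lemma PP: "Z \<in> Zl_mats l \<Longrightarrow> lmult l Pinv (lmult l P Z) = Z"
         "Z \<in> Zl_mats l \<Longrightarrow> lmult l P (lmult l Pinv Z) = Z"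
proof -
  assume Z: "Z \<in> Zl_mats l"
  have "lmult l Pinv (lmult l P Z) = lmult l (lmult l Pinv P) Z" by (simp only: lmult_assoc)
  then show "lmult l Pinv (lmult l P Z) = Z" using Pinv_prop(3) lone_left[OF Z] by simp
next
  assume Z: "Z \<in> Zl_mats l"
  have "lmult l P (lmult l Pinv Z) = lmult l (lmult l P Pinv) Z" by (simp only: lmult_assoc)
  then show "lmult l P (lmult l Pinv Z) = Z" using Pinv_prop(2) lone_left[OF Z] by simp
qed

lemma W_n: "W n = mmod (L ^ n) (0, - d n, 1, t n)"
proof -
  have h: "[x * (1 mod m) = x] (mod m)" for x m :: int
    unfolding cong_def by (metis mod_mult_right_eq mult.right_neutral)
  have h0: "[x mod m = x] (mod m)" for x m :: int unfolding cong_def by simp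
  have "W n = mmod (L^n) (0 mod L^n, - (d n * (1 mod L^n)), 1 mod L^n, 0 mod L^n + t n * (1 mod L^n))"
    unfolding W_def quad_elt_def zseq_def by simp
  also have "\<dots> = mmod (L ^ n) (0, - d n, 1, t n)"
    unfolding mmod_eq_iff
    using h0 h cong_minus_minus_iff cong_add by (metis add_0)
  finally show ?thesis .
qed

lemma conj_Z: "M \<in> Zl_mats l \<Longrightarrow> conj M \<in> Zl_mats l"
  unfolding conj_def by (rule lmult_closed[OF lmult_closed[OF P_Z] Pinv_prop(1)])

definition comW where "comW X \<longleftrightarrow> lmult l X W = lmult l W X"

lemma comW_quad: assumes "X \<in> Zl_mats l" "comW X"
  shows "X = quad_elt l t d (\<lambda>n. fst (X n)) (\<lambda>n. fst (snd (snd (X n))))"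
proof
  fix n
  obtain a b c e where Xn: "X n = (a,b,c,e)" by (cases "X n")
  have norm: "mmod (L^n) (X n) = X n" by (rule Zl_mats_norm[OF assms(1)])
  have "mmod (L^n) (mmul (X n) (W n)) = mmod (L^n) (mmul (W n) (X n))"
    using assms(2) unfolding comW_def lmult_def by meson
  then have "mmod (L^n) (mmul (X n) (0, - d n, 1, t n)) = mmod (L^n) (mmul (0, - d n, 1, t n) (X n))"
    unfolding W_n by (simp add: mmod_mmul_left mmod_mmul_right)
  then have e: "[b = - (d n * c)] (mod L^n)" "[e = a + t n * c] (mod L^n)"
    unfolding Xn mmul_simp mmod_eq_iff by (simp_all add: algebra_simps)
  have "quad_elt l t d (\<lambda>n. fst (X n)) (\<lambda>n. fst (snd (snd (X n)))) n = mmod (L^n) (a, - (d n * c), c, a + t n * c)"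
    unfolding quad_elt_def Xn by simp
  also have "\<dots> = mmod (L^n) (a,b,c,e)"
    unfolding mmod_eq_iff using e by (simp add: cong_sym)
  finally show "X n = quad_elt l t d (\<lambda>n. fst (X n)) (\<lambda>n. fst (snd (snd (X n)))) n"
    using norm Xn by simp
qed

lemma C_iff: "M \<in> C \<longleftrightarrow> M \<in> GL2 l \<and> comW (conj M)"
proof
  assume "M \<in> C"
  then obtain x y where M: "M \<in> GL2 l" "x \<in> Zl l" "y \<in> Zl l" "lmult l P M = lmult l (quad_elt l t d x y) P"
    unfolding C_def by blast
  have Q: "quad_elt l t d x y \<in> Zl_mats l" by (rule quad_Zl[OF t d M(2,3)])
  have "conj M = quad_elt l t d x y"
    unfolding conj_def M(4) using Pinv_prop Q by (simp add: lmult_assoc lone_right)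
  then show "M \<in> GL2 l \<and> comW (conj M)" using M quad_comm_W unfolding comW_def by simp
next
  assume M: "M \<in> GL2 l \<and> comW (conj M)"
  have MZ: "M \<in> Zl_mats l" using M GL2_Z by blast
  define X where "X = conj M"
  have XZ: "X \<in> Zl_mats l" unfolding X_def by (rule conj_Z[OF MZ])
  have xy: "(\<lambda>n. fst (X n)) \<in> Zl l" "(\<lambda>n. fst (snd (snd (X n)))) \<in> Zl l" by (rule Zl_of_mat[OF XZ])+
  have XQ: "X = quad_elt l t d (\<lambda>n. fst (X n)) (\<lambda>n. fst (snd (snd (X n))))"
    using comW_quad[OF XZ] M unfolding X_def by blast
  have "lmult l X P = lmult l P M"
    unfolding X_def conj_def using Pinv_prop P_Z MZ by (simp add: lmult_assoc lone_right lmult_closed)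
  then have "lmult l P M = lmult l (quad_elt l t d (\<lambda>n. fst (X n)) (\<lambda>n. fst (snd (snd (X n))))) P"
    using XQ by simp
  then show "M \<in> C" unfolding C_def using M xy by blast
qed

lemma comW_mult: assumes "X \<in> Zl_mats l" "Y \<in> Zl_mats l" "comW X" "comW Y" shows "comW (lmult l X Y)"
proof -
  have "lmult l (lmult l X Y) W = lmult l X (lmult l Y W)" by (simp add: lmult_assoc)
  also have "\<dots> = lmult l X (lmult l W Y)" using assms(4) unfolding comW_def by simp
  also have "\<dots> = lmult l (lmult l X W) Y" by (simp add: lmult_assoc)
  also have "\<dots> = lmult l (lmult l W X) Y" using assms(3) unfolding comW_def by simp
  also have "\<dots> = lmult l W (lmult l X Y)" by (simp add: lmult_assoc)
  finally show ?thesis unfolding comW_def .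
qed

lemma conj_mult: assumes "M \<in> Zl_mats l" "N \<in> Zl_mats l"
  shows "conj (lmult l M N) = lmult l (conj M) (conj N)"
  unfolding conj_def using assms Pinv_prop P_Z by (simp add: lmult_assoc PP(1) lmult_closed)

lemma C_GL2: "C \<subseteq> GL2 l" unfolding C_def by blast
lemma C_Z: "M \<in> C \<Longrightarrow> M \<in> Zl_mats l" using C_GL2 GL2_Z by blast

lemma C_mult: "M \<in> C \<Longrightarrow> N \<in> C \<Longrightarrow> lmult l M N \<in> C"
proof -
  assume a: "M \<in> C" "N \<in> C"
  then have g: "M \<in> GL2 l" "N \<in> GL2 l" "comW (conj M)" "comW (conj N)" unfolding C_iff by auto
  then have z: "M \<in> Zl_mats l" "N \<in> Zl_mats l" using GL2_Z by auto
  show ?thesis unfolding C_iff conj_mult[OF z]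
    using GL2_mult[OF g(1,2)] comW_mult[OF conj_Z[OF z(1)] conj_Z[OF z(2)] g(3,4)] by simp
qed

lemma C_inv: assumes "M \<in> C" "N \<in> Zl_mats l" "lmult l M N = lone l" "lmult l N M = lone l"
  shows "N \<in> C"
proof -
  have MZ: "M \<in> Zl_mats l" by (rule C_Z[OF assms(1)])
  have NG: "N \<in> GL2 l" unfolding GL2_def using assms MZ by blast
  have "lmult l (conj M) (conj N) = conj (lone l)" using conj_mult[OF MZ assms(2)] assms(3) by simp
  moreover have "lmult l (conj N) (conj M) = conj (lone l)" using conj_mult[OF assms(2) MZ] assms(4) by simp
  moreover have "conj (lone l) = lone l" unfolding conj_def using Pinv_prop P_Z by (simp add: lone_right)
  ultimately have i: "lmult l (conj M) (conj N) = lone l" "lmult l (conj N) (conj M) = lone l" by simp_all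
  have "comW (conj N)"
    using monoid_comm_inv[OF monoid_Mon, where x="conj M" and y="conj N" and w=W] i assms(1) conj_Z[OF MZ] conj_Z[OF assms(2)] W_Z
    unfolding C_iff comW_def by simp
  then show ?thesis using NG C_iff by blast
qed

lemma lone_C: "lone l \<in> C"
proof -
  have "conj (lone l) = lone l" unfolding conj_def using Pinv_prop P_Z by (simp add: lone_right)
  then show ?thesis unfolding C_iff comW_def using lone_GL2 W_Z lone_left lone_right by simp
qed

end


context cset begin

lemma G_C: "G \<subseteq> C" using sub unfolding is_subgroup_def by blast
lemma G_Z: "M \<in> G \<Longrightarrow> M \<in> Zl_mats l" using G_C C_Z by blast
lemma lone_G: "lone l \<in> G" using sub unfolding is_subgroup_def by blast
lemma G_mult: "M \<in> G \<Longrightarrow> N \<in> G \<Longrightarrow> lmult l M N \<in> G" using sub unfolding is_subgroup_def by blast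
lemma G_inv: assumes "M \<in> G" obtains N where "N \<in> G" "lmult l M N = lone l" "lmult l N M = lone l"
  using sub assms unfolding is_subgroup_def by blast

lemma Lpos: "L ^ n > 0" using l2 by simp

lemma mmod_range: "m > 0 \<Longrightarrow> mmod m A \<in> {0..<m} \<times> {0..<m} \<times> {0..<m} \<times> {0..<m}"
  by (cases A) (simp add: mmod_simp)

lemma Zl_range: "M \<in> Zl_mats l \<Longrightarrow> M n \<in> {0..<L^n} \<times> {0..<L^n} \<times> {0..<L^n} \<times> {0..<L^n}"
  using Zl_mats_norm[of M l n] mmod_range[OF Lpos, of n "M n"] by simp

lemma red_finite: "X \<subseteq> Zl_mats l \<Longrightarrow> finite (red X n)"
proof -
  assume X: "X \<subseteq> Zl_mats l"
  have "red X n \<subseteq> {0..<L^n} \<times> {0..<L^n} \<times> {0..<L^n} \<times> {0..<L^n}"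
    unfolding red_def using X Zl_range by blast
  then show ?thesis by (rule finite_subset) simp
qed

lemma redG_finite: "finite (red G n)" using red_finite G_Z by blast

definition cyl where "cyl n A = {M \<in> G. M n = A}"

lemma haar_facts: "space \<mu> = G" "sets \<mu> = sigma_sets G {{M \<in> G. M n = A} | n A. True}" "prob_space \<mu>"
  "\<And>g A. g \<in> G \<Longrightarrow> A \<in> sets \<mu> \<Longrightarrow> emeasure \<mu> ((\<lambda>M. lmult l g M) ` A) = emeasure \<mu> A"
  using haar unfolding haar_prob_def by blast+

lemma cyl_sets: "cyl n A \<in> sets \<mu>"
  unfolding haar_facts(2) cyl_def by (rule sigma_sets.Basic) blast

lemma red_norm: "A \<in> red G n \<Longrightarrow> mmod (L^n) A = A"
  unfolding red_def using Zl_mats_norm G_Z by blast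

lemma cyl_translate: assumes g: "g \<in> G" and A: "A \<in> red G n"
  shows "(\<lambda>M. lmult l g M) ` cyl n A = cyl n (mmod (L^n) (mmul (g n) A))"
proof
  show "(\<lambda>M. lmult l g M) ` cyl n A \<subseteq> cyl n (mmod (L^n) (mmul (g n) A))"
    unfolding cyl_def using G_mult[OF g] by (auto simp: lmult_def)
next
  obtain h where h: "h \<in> G" "lmult l g h = lone l" "lmult l h g = lone l" using G_inv[OF g] by blast
  show "cyl n (mmod (L^n) (mmul (g n) A)) \<subseteq> (\<lambda>M. lmult l g M) ` cyl n A"
  proof
    fix N assume N: "N \<in> cyl n (mmod (L^n) (mmul (g n) A))"
    have NG: "N \<in> G" and Nn: "N n = mmod (L^n) (mmul (g n) A)" using N unfolding cyl_def by auto
    have "lmult l g (lmult l h N) = lmult l (lmult l g h) N" by (simp add: lmult_assoc)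
    also have "\<dots> = N" using h(2) lone_left G_Z[OF NG] by simp
    finally have e1: "lmult l g (lmult l h N) = N" .
    have "lmult l h N n = mmod (L^n) (mmul (h n) (mmod (L^n) (mmul (g n) A)))"
      unfolding lmult_def Nn by simp
    also have "\<dots> = mmod (L^n) (mmul (mmul (h n) (g n)) A)" by (simp add: mmod_mmul_right mmul_assoc)
    also have "\<dots> = mmod (L^n) (mmul (lmult l h g n) A)"
      unfolding lmult_def by (simp add: mmod_mmul_left)
    also have "\<dots> = mmod (L^n) A" unfolding h(3) lone_def by (simp add: mmod_mmul_left)
    also have "\<dots> = A" by (rule red_norm[OF A])
    finally have e2: "lmult l h N n = A" .
    have "lmult l h N \<in> cyl n A" unfolding cyl_def using e2 G_mult[OF h(1) NG] by simp
    then show "N \<in> (\<lambda>M. lmult l g M) ` cyl n A" using e1 by force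
  qed
qed

lemma cyl_equal: assumes A: "A \<in> red G n" and B: "B \<in> red G n"
  shows "emeasure \<mu> (cyl n A) = emeasure \<mu> (cyl n B)"
proof -
  obtain MA where MA: "MA \<in> G" "MA n = A" using A unfolding red_def by blast
  obtain MB where MB: "MB \<in> G" "MB n = B" using B unfolding red_def by blast
  obtain h where h: "h \<in> G" "lmult l MA h = lone l" "lmult l h MA = lone l" using G_inv[OF MA(1)] by blast
  define g where "g = lmult l MB h"
  have g: "g \<in> G" unfolding g_def by (rule G_mult[OF MB(1) h(1)])
  have "mmod (L^n) (mmul (g n) A) = mmod (L^n) (mmul (mmul (MB n) (h n)) (MA n))"
    unfolding g_def lmult_def MA(2)[symmetric] by (simp add: mmod_mmul_left)
  also have "\<dots> = mmod (L^n) (mmul (MB n) (mmod (L^n) (mmul (h n) (MA n))))"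
    by (simp add: mmod_mmul_right mmul_assoc)
  also have "\<dots> = mmod (L^n) (mmul (MB n) (lone l n))"
    using h(3) unfolding lmult_def by (metis)
  also have "\<dots> = B" unfolding lone_def using MB red_norm[OF B] by (simp add: mmod_mmul_right)
  finally have "mmod (L^n) (mmul (g n) A) = B" .
  then have "(\<lambda>M. lmult l g M) ` cyl n A = cyl n B" using cyl_translate[OF g A] by simp
  then show ?thesis using haar_facts(4)[OF g cyl_sets[of n A]] by simp
qed

lemma G_union: "G = (\<Union>A\<in>red G n. cyl n A)"
  unfolding cyl_def red_def by blast

lemma cyl_disj: "disjoint_family_on (cyl n) S"
  unfolding disjoint_family_on_def cyl_def by blast

interpretation PS: prob_space \<mu> by (rule haar_facts(3))

lemma measure_union_cyl: assumes "T \<subseteq> red G n"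
  shows "measure \<mu> (\<Union>A\<in>T. cyl n A) = (\<Sum>A\<in>T. measure \<mu> (cyl n A))"
  using assms redG_finite[of n] cyl_sets cyl_disj
  by (intro measure_finite_Union) (auto intro: finite_subset simp: PS.emeasure_finite)

lemma cyl_measure: assumes A: "A \<in> red G n" shows "measure \<mu> (cyl n A) = 1 / card (red G n)"
proof -
  have eq: "measure \<mu> (cyl n B) = measure \<mu> (cyl n A)" if "B \<in> red G n" for B
    using cyl_equal[OF that A] by (simp add: measure_def)
  have "1 = measure \<mu> G" using PS.prob_space haar_facts(1) by simp
  also have "\<dots> = (\<Sum>B\<in>red G n. measure \<mu> (cyl n B))"
    using measure_union_cyl[of "red G n" n] G_union[of n] by simp
  also have "\<dots> = card (red G n) * measure \<mu> (cyl n A)" using eq by simp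
  finally have "1 = card (red G n) * measure \<mu> (cyl n A)" .
  then show ?thesis by (metis nonzero_eq_divide_eq mult.commute mult_zero_left zero_neq_one)
qed

lemma measure_cyls: assumes "T \<subseteq> red G n"
  shows "measure \<mu> (\<Union>A\<in>T. cyl n A) = card T / card (red G n)"
proof -
  have "(\<Sum>A\<in>T. measure \<mu> (cyl n A)) = (\<Sum>A\<in>T. 1 / card (red G n))"
    by (rule sum.cong) (use cyl_measure assms in auto)
  then have "measure \<mu> (\<Union>A\<in>T. cyl n A) = (\<Sum>A\<in>T. 1 / card (red G n))"
    using measure_union_cyl[OF assms] by simp
  then show ?thesis by simp
qed

end


context cset begin

definition K where "K n = {N \<in> C. N n = lone l n}"

lemma coset_G: assumes "Q \<in> G" shows "(\<lambda>N. lmult l Q N) ` G = G"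
proof
  show "(\<lambda>N. lmult l Q N) ` G \<subseteq> G" using G_mult[OF assms] by blast
  obtain h where h: "h \<in> G" "lmult l Q h = lone l" "lmult l h Q = lone l" using G_inv[OF assms] by blast
  show "G \<subseteq> (\<lambda>N. lmult l Q N) ` G"
  proof
    fix B assume B: "B \<in> G"
    have "lmult l Q (lmult l h B) = lmult l (lmult l Q h) B" by (simp add: lmult_assoc)
    also have "\<dots> = B" using h(2) lone_left G_Z[OF B] by simp
    finally show "B \<in> (\<lambda>N. lmult l Q N) ` G" using G_mult[OF h(1) B] by force
  qed
qed

lemma coset_mult: "(\<lambda>N. lmult l (lmult l A B) N) ` G = (\<lambda>N. lmult l A N) ` ((\<lambda>N. lmult l B N) ` G)"
  by (simp add: image_image lmult_assoc)

definition Sc where "Sc = {(\<lambda>N. lmult l M N) ` G | M. M \<in> C}"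
definition Fr where "Fr n X = (\<lambda>N. N n) ` X"

lemma Fr_coset: "Fr n ((\<lambda>N. lmult l M N) ` G) = (\<lambda>B. mmod (L ^ n) (mmul (M n) B)) ` red G n"
  unfolding Fr_def red_def image_image lmult_def by simp

lemma Sn_eq: "{(\<lambda>B. mmod (int l ^ n) (mmul A B)) ` red G n | A. A \<in> red C n} = Fr n ` Sc"
proof -
  have "{(\<lambda>B. mmod (int l ^ n) (mmul A B)) ` red G n | A. A \<in> red C n}
      = {(\<lambda>B. mmod (int l ^ n) (mmul (M n) B)) ` red G n | M. M \<in> C}"
    unfolding red_def by blast
  also have "\<dots> = Fr n ` Sc" unfolding Sc_def using Fr_coset by blast
  finally show ?thesis .
qed

lemma level_index_eq: "level_index l n C G = card (Fr n ` Sc)"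
  unfolding level_index_def Sn_eq ..

lemma ladic_index_eq: "ladic_index l C G = card Sc"
  unfolding ladic_index_def Sc_def ..

lemma FrSc_finite: "finite (Fr n ` Sc)"
proof -
  have "Fr n X \<subseteq> {0..<L^n} \<times> {0..<L^n} \<times> {0..<L^n} \<times> {0..<L^n}" if X: "X \<in> Sc" for X
  proof -
    obtain M where M: "X = (\<lambda>N. lmult l M N) ` G" using X unfolding Sc_def by blast
    have "Fr n X = (\<lambda>N. mmod (L^n) (mmul (M n) (N n))) ` G" unfolding M Fr_def lmult_def image_image by simp
    then show ?thesis using mmod_range[OF Lpos] by (simp add: image_subset_iff)
  qed
  then have "Fr n ` Sc \<subseteq> Pow ({0..<L^n} \<times> {0..<L^n} \<times> {0..<L^n} \<times> {0..<L^n})" by blast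
  then show ?thesis by (rule finite_subset) simp
qed

lemma G_in_Sc: "G \<in> Sc"
proof -
  have "(\<lambda>N. lmult l (lone l) N) ` G = G" by (rule coset_G[OF lone_G])
  then show ?thesis unfolding Sc_def using lone_C by force
qed

lemma Sc_ne: "Sc \<noteq> {}" using G_in_Sc by blast

lemma K_sub_imp_inj: assumes n: "K n \<subseteq> G" shows "inj_on (Fr n) Sc"
proof
  fix X Y assume X: "X \<in> Sc" and Y: "Y \<in> Sc" and eq: "Fr n X = Fr n Y"
  obtain M where M: "M \<in> C" "X = (\<lambda>N. lmult l M N) ` G" using X unfolding Sc_def by blast
  obtain M' where M': "M' \<in> C" "Y = (\<lambda>N. lmult l M' N) ` G" using Y unfolding Sc_def by blast
  have MZ: "M \<in> Zl_mats l" by (rule C_Z[OF M(1)])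
  have "M = lmult l M (lone l)" using lone_right[OF MZ] by simp
  then have "M \<in> X" using M(2) lone_G by blast
  then have "M n \<in> Fr n Y" using eq unfolding Fr_def by blast
  then obtain N where N: "N \<in> G" "M n = lmult l M' N n" unfolding M'(2) Fr_def by blast
  define M'' where "M'' = lmult l M' N"
  have M''C: "M'' \<in> C" unfolding M''_def using C_mult M'(1) N(1) G_C by blast
  then have "M'' \<in> GL2 l" using C_GL2 by blast
  then obtain N'' where N'': "N'' \<in> GL2 l" "lmult l M'' N'' = lone l" "lmult l N'' M'' = lone l"
    by (rule GL2_inv)
  have N''C: "N'' \<in> C" using C_inv[OF M''C GL2_Z[OF N''(1)] N''(2,3)] .
  define Q where "Q = lmult l N'' M"
  have QC: "Q \<in> C" unfolding Q_def by (rule C_mult[OF N''C M(1)])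
  have "Q n = mmod (L^n) (mmul (N'' n) (M n))" unfolding Q_def lmult_def ..
  also have "\<dots> = lmult l N'' M'' n" unfolding N(2) M''_def lmult_def by (simp add: mmod_mmul_right)
  also have "\<dots> = lone l n" using N''(3) by simp
  finally have "Q \<in> K n" unfolding K_def using QC by simp
  then have QG: "Q \<in> G" using n by blast
  have "lmult l M'' Q = lmult l (lmult l M'' N'') M" unfolding Q_def by (simp add: lmult_assoc)
  also have "\<dots> = M" using N''(2) lone_left[OF MZ] by simp
  finally have MQ: "lmult l M'' Q = M" .
  have "X = (\<lambda>N. lmult l M'' N) ` ((\<lambda>N. lmult l Q N) ` G)"
    unfolding M(2) MQ[symmetric] coset_mult ..
  also have "\<dots> = (\<lambda>N. lmult l M'' N) ` G" using coset_G[OF QG] by simp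
  also have "\<dots> = (\<lambda>N. lmult l M' N) ` ((\<lambda>N'. lmult l N N') ` G)"
    unfolding M''_def coset_mult ..
  also have "\<dots> = Y" using coset_G[OF N(1)] M'(2) by simp
  finally show "X = Y" .
qed

lemma open_K: "\<exists>n>0. K n \<subseteq> G"
proof -
  obtain n where n: "\<forall>N\<in>C. N n = lone l n \<longrightarrow> N \<in> G"
    using opn lone_G unfolding open_in_ladic_def by blast
  have "K (Suc n) \<subseteq> G"
  proof
    fix N assume "N \<in> K (Suc n)"
    then have N: "N \<in> C" "N (Suc n) = lone l (Suc n)" unfolding K_def by auto
    have "N n = mmod (L^n) (N (Suc n))" by (rule Zl_matsD[OF C_Z[OF N(1)]])
    also have "\<dots> = lone l n" unfolding N(2) by (rule Zl_matsD[OF lone_closed, symmetric])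
    finally show "N \<in> G" using n N(1) by blast
  qed
  then show ?thesis by blast
qed

lemma level_facts: "0 < level l C G" "level_index l (level l C G) C G = ladic_index l C G"
proof -
  obtain n where n: "n > 0" "K n \<subseteq> G" using open_K by blast
  have "level_index l n C G = ladic_index l C G"
    unfolding level_index_eq ladic_index_eq using card_image[OF K_sub_imp_inj[OF n(2)]] .
  then have ex: "\<exists>n. 0 < n \<and> level_index l n C G = ladic_index l C G" using n by blast
  show "0 < level l C G" "level_index l (level l C G) C G = ladic_index l C G"
    unfolding level_def using LeastI_ex[OF ex] by blast+
qed

lemma index_imp_K: assumes "level_index l n C G = ladic_index l C G" shows "K n \<subseteq> G"
proof
  fix N assume N: "N \<in> K n"
  have NC: "N \<in> C" and Nn: "N n = lone l n" using N unfolding K_def by auto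
  have eqc: "card (Fr n ` Sc) = card Sc" using assms unfolding level_index_eq ladic_index_eq .
  have "card (Fr n ` Sc) > 0" using FrSc_finite Sc_ne by (simp add: card_gt_0_iff)
  then have fin: "finite Sc" using eqc card_ge_0_finite by metis
  have inj: "inj_on (Fr n) Sc" using eqc fin eq_card_imp_inj_on by blast
  have NS: "(\<lambda>M. lmult l N M) ` G \<in> Sc" unfolding Sc_def using NC by blast
  have "Fr n ((\<lambda>M. lmult l N M) ` G) = (\<lambda>B. mmod (L ^ n) (mmul (lone l n) B)) ` red G n"
    unfolding Fr_coset Nn ..
  also have "\<dots> = red G n"
  proof -
    have "mmod (L ^ n) (mmul (lone l n) B) = B" if "B \<in> red G n" for B
      unfolding lone_def using red_norm[OF that] by (simp add: mmod_mmul_left)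
    then show ?thesis by simp
  qed
  also have "\<dots> = Fr n G" unfolding Fr_def red_def ..
  finally have "(\<lambda>M. lmult l N M) ` G = G" using inj NS G_in_Sc unfolding inj_on_def by blast
  moreover have "N = lmult l N (lone l)" using lone_right[OF C_Z[OF NC]] by simp
  ultimately show "N \<in> G" using lone_G by blast
qed

lemma n0_facts: "0 < level l C G" "K (level l C G) \<subseteq> G"
  using level_facts index_imp_K by auto

end


lemma mmod_mid: "mmod m (mmul (mmul A (mmod m B)) D) = mmod m (mmul (mmul A B) D)"
  by (metis mmod_mmul_left mmod_mmul_right)

lemma lmult3: "lmult l (lmult l A B) D k = mmod (int l ^ k) (mmul (mmul (A k) (B k)) (D k))"
  unfolding lmult_def by (simp add: mmod_mmul_left)

context cset begin

lemma lone_n: "n > 0 \<Longrightarrow> lone l n = (1,0,0,1)"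
proof -
  assume "n > 0"
  then have "L ^ n \<ge> L" using l2 by (simp add: self_le_power)
  then have "L ^ n > 1" using l2 by linarith
  then show ?thesis unfolding lone_def by (simp add: mmod_simp)
qed

definition Qx where "Qx n x0 y0 = quad_elt l t d (zseq l (1 + L^n*x0)) (zseq l (L^n*y0))"
definition Ex where "Ex n x0 y0 = lmult l (lmult l Pinv (Qx n x0 y0)) P"

lemma Qx_Z: "Qx n x0 y0 \<in> Zl_mats l" unfolding Qx_def by (rule quad_Zl[OF t d zseq_Zl zseq_Zl])

lemma Qx_n: "Qx n x0 y0 n = lone l n"
proof -
  have h: "[x * (L^n * y) = 0] (mod L^n)" for x y by (simp add: cong_def)
  show ?thesis unfolding Qx_def quad_elt_def lone_def zseq_def mmod_eq_iff
    using h by (simp add: cong_def mod_simps)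
qed

lemma Ex_Z: "Ex n x0 y0 \<in> Zl_mats l"
  unfolding Ex_def by (rule lmult_closed[OF lmult_closed[OF Pinv_prop(1) Qx_Z] P_Z])

lemma conj_Ex: "conj (Ex n x0 y0) = Qx n x0 y0"
proof -
  have "conj (Ex n x0 y0) = lmult l P (lmult l Pinv (lmult l (Qx n x0 y0) (lmult l P Pinv)))"
    unfolding conj_def Ex_def by (simp add: lmult_assoc)
  also have "\<dots> = Qx n x0 y0" using Qx_Z Pinv_prop(2) by (simp add: PP lone_right)
  finally show ?thesis .
qed

lemma conj_level: "conj M k = mmod (L^k) (mmul (mmul (P k) (M k)) (Pinv k))"
  unfolding conj_def by (rule lmult3)

lemma Ex_n: "Ex n x0 y0 n = lone l n"
proof -
  have "Ex n x0 y0 n = mmod (L^n) (mmul (mmul (Pinv n) (lone l n)) (P n))"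
    unfolding Ex_def lmult3 Qx_n ..
  also have "\<dots> = mmod (L^n) (mmul (Pinv n) (P n))"
    unfolding lone_def mmod_mid by simp
  also have "\<dots> = lone l n" using Pinv_prop(3) unfolding lmult_def by metis
  finally show ?thesis .
qed

lemma K_Z: "Q \<in> K n \<Longrightarrow> Q \<in> Zl_mats l" unfolding K_def using C_Z by blast

lemma Ex_K: assumes n: "n > 0" shows "Ex n x0 y0 \<in> K n"
proof -
  have "Ex n x0 y0 1 = mmod (L^1) (Ex n x0 y0 n)" using Zl_mats_le[OF Ex_Z, of 1 n] n by simp
  also have "\<dots> = (1,0,0,1)" unfolding Ex_n lone_n[OF n] using l2 by (simp add: mmod_simp)
  finally have "coprime (det4 (Ex n x0 y0 1)) L" by (simp add: det4_def)
  then have g: "Ex n x0 y0 \<in> GL2 l" by (rule GL2_of_coprime[OF prime Ex_Z])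
  have "comW (conj (Ex n x0 y0))" unfolding conj_Ex Qx_def comW_def by (rule quad_comm_W[OF zseq_Zl zseq_Zl])
  then show ?thesis unfolding K_def C_iff using g Ex_n by simp
qed

lemma pow_Suc_mod: assumes "0 \<le> x" "x < L" "0 \<le> c" "c < L^n" shows "(c + L^n * x) mod L^Suc n = c + L^n * x"
proof -
  note that = assms(3,4)
  have "L^n * x \<le> L^n * (L - 1)" using assms Lpos[of n] by (intro mult_left_mono) auto
  then have "c + L^n * x < L^Suc n" using that by (simp add: algebra_simps)
  then show ?thesis using that assms Lpos[of n] by (intro mod_pos_pos_trivial) auto
qed

lemma Ex_inj: assumes n: "n > 0" and x: "x0 \<in> {0..<L}" "y0 \<in> {0..<L}" "x1 \<in> {0..<L}" "y1 \<in> {0..<L}"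
  and eq: "Ex n x0 y0 (Suc n) = Ex n x1 y1 (Suc n)"
  shows "x0 = x1 \<and> y0 = y1"
proof -
  have "conj (Ex n x0 y0) (Suc n) = conj (Ex n x1 y1) (Suc n)" unfolding conj_level eq ..
  then have "Qx n x0 y0 (Suc n) = Qx n x1 y1 (Suc n)" unfolding conj_Ex .
  then have e: "(1 + L^n*x0) mod L^Suc n = (1 + L^n*x1) mod L^Suc n"
     "(L^n*y0) mod L^Suc n = (L^n*y1) mod L^Suc n"
    unfolding Qx_def quad_elt_def zseq_def by (simp_all add: mmod_simp)
  have "L ^ n \<ge> L" using l2 n by (simp add: self_le_power)
  then have "1 < L^n" using l2 by linarith
  then have "1 + L^n*x0 = 1 + L^n*x1"
    using e(1) pow_Suc_mod[where x=x0 and c=1 and n=n] pow_Suc_mod[where x=x1 and c=1 and n=n] x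
    by simp
  moreover have "0 + L^n*y0 = 0 + L^n*y1"
    using e(2) pow_Suc_mod[where x=y0 and c=0 and n=n] pow_Suc_mod[where x=y1 and c=0 and n=n] x Lpos[of n]
    by simp
  ultimately show ?thesis using l2 by simp
qed

end


context cset begin

lemma K_red: assumes n: "n > 0"
  shows "red (K n) (Suc n) = (\<lambda>(x0,y0). Ex n x0 y0 (Suc n)) ` ({0..<L} \<times> {0..<L})"
proof
  show "(\<lambda>(x0,y0). Ex n x0 y0 (Suc n)) ` ({0..<L} \<times> {0..<L}) \<subseteq> red (K n) (Suc n)"
    unfolding red_def using Ex_K[OF n] by auto
next
  show "red (K n) (Suc n) \<subseteq> (\<lambda>(x0,y0). Ex n x0 y0 (Suc n)) ` ({0..<L} \<times> {0..<L})"
  proof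
    fix A assume "A \<in> red (K n) (Suc n)"
    then obtain Q where Q: "Q \<in> K n" "A = Q (Suc n)" unfolding red_def by blast
    have QC: "Q \<in> C" and Qn: "Q n = lone l n" using Q unfolding K_def by auto
    have QZ: "Q \<in> Zl_mats l" by (rule C_Z[OF QC])
    define X where "X = conj Q"
    have XZ: "X \<in> Zl_mats l" unfolding X_def by (rule conj_Z[OF QZ])
    have cw: "comW X" using QC unfolding C_iff X_def by blast
    have XQ: "X = quad_elt l t d (\<lambda>n. fst (X n)) (\<lambda>n. fst (snd (snd (X n))))" by (rule comW_quad[OF XZ cw])
    have "X n = mmod (L^n) (mmul (mmul (P n) (lone l n)) (Pinv n))" unfolding X_def conj_level Qn ..
    also have "\<dots> = mmod (L^n) (mmul (P n) (Pinv n))" unfolding lone_def mmod_mid by simp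
    also have "\<dots> = lone l n" using Pinv_prop(2) unfolding lmult_def by metis
    finally have Xn: "X n = (1,0,0,1)" using lone_n[OF n] by simp
    obtain a b c e where XS: "X (Suc n) = (a,b,c,e)" by (cases "X (Suc n)")
    have "X n = mmod (L^n) (X (Suc n))" by (rule Zl_matsD[OF XZ])
    then have ac: "a mod L^n = 1" "c mod L^n = 0" using Xn XS by (simp_all add: mmod_simp)
    have rng: "0 \<le> a" "a < L^Suc n" "0 \<le> c" "c < L^Suc n" using Zl_range[OF XZ, of "Suc n"] XS by auto
    define x0 where "x0 = a div L^n"
    define y0 where "y0 = c div L^n"
    have a: "a = 1 + L^n * x0" unfolding x0_def using ac(1) by (metis add.commute mult.commute mult_div_mod_eq)
    have c: "c = L^n * y0" unfolding y0_def using ac(2) by (metis add.right_neutral mult.commute mult_div_mod_eq)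
    have x0p: "x0 \<ge> 0" unfolding x0_def using rng Lpos[of n] by (simp add: pos_imp_zdiv_nonneg_iff)
    have y0p: "y0 \<ge> 0" unfolding y0_def using rng Lpos[of n] by (simp add: pos_imp_zdiv_nonneg_iff)
    have x0r: "x0 \<in> {0..<L}"
    proof -
      have "L^n * x0 < L^n * L" using rng(2) a by (simp add: mult.commute)
      then show ?thesis using x0p Lpos[of n] by (simp add: mult_less_cancel_left)
    qed
    have y0r: "y0 \<in> {0..<L}"
    proof -
      have "L^n * y0 < L^n * L" using rng(4) c by (simp add: mult.commute)
      then show ?thesis using y0p Lpos[of n] by (simp add: mult_less_cancel_left)
    qed
    have "Qx n x0 y0 (Suc n) = mmod (L^Suc n) (a mod L^Suc n, - (d (Suc n) * (c mod L^Suc n)), c mod L^Suc n,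
               a mod L^Suc n + t (Suc n) * (c mod L^Suc n))"
      unfolding Qx_def quad_elt_def zseq_def a c by simp
    also have "\<dots> = mmod (L^Suc n) (a, - (d (Suc n) * c), c, a + t (Suc n) * c)"
      using rng by simp
    also have "\<dots> = X (Suc n)"
    proof -
      have "X (Suc n) = quad_elt l t d (\<lambda>n. fst (X n)) (\<lambda>n. fst (snd (snd (X n)))) (Suc n)"
        using fun_cong[OF XQ, of "Suc n"] .
      then show ?thesis unfolding quad_elt_def XS by simp
    qed
    finally have QX: "Qx n x0 y0 (Suc n) = X (Suc n)" .
    have "lmult l (lmult l Pinv X) P = Q"
    proof -
      have "lmult l (lmult l Pinv X) P = lmult l Pinv (lmult l P (lmult l Q (lmult l Pinv P)))"
        unfolding X_def conj_def by (simp add: lmult_assoc)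
      also have "\<dots> = Q" using QZ Pinv_prop(3) by (simp add: lone_right PP)
      finally show ?thesis .
    qed
    then have "A = lmult l (lmult l Pinv X) P (Suc n)" using Q(2) by simp
    then have "A = mmod (L^Suc n) (mmul (mmul (Pinv (Suc n)) (X (Suc n))) (P (Suc n)))"
      unfolding lmult3 .
    also have "\<dots> = Ex n x0 y0 (Suc n)" unfolding Ex_def lmult3 QX ..
    finally show "A \<in> (\<lambda>(x0,y0). Ex n x0 y0 (Suc n)) ` ({0..<L} \<times> {0..<L})" using x0r y0r by force
  qed
qed

lemma K_card: assumes n: "n > 0" shows "card (red (K n) (Suc n)) = l^2"
proof -
  have "inj_on (\<lambda>(x0,y0). Ex n x0 y0 (Suc n)) ({0..<L} \<times> {0..<L})"
    unfolding inj_on_def using Ex_inj[OF n] by auto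
  then have "card (red (K n) (Suc n)) = card ({0..<L} \<times> {0..<L})" unfolding K_red[OF n] by (rule card_image)
  also have "\<dots> = l^2" by (simp add: card_cartesian_product power2_eq_square)
  finally show ?thesis .
qed

end


context cset begin

lemma fiber: assumes n: "n > 0" and KG: "K n \<subseteq> G" and B: "B \<in> red G n"
  shows "card {A \<in> red G (Suc n). mmod (L^n) A = B} = l^2"
proof -
  obtain M where M: "M \<in> G" "M n = B" using B unfolding red_def by blast
  obtain h where h: "h \<in> G" "lmult l M h = lone l" "lmult l h M = lone l" using G_inv[OF M(1)] by blast
  define f where "f E = mmod (L^Suc n) (mmul (M (Suc n)) E)" for E
  have fib: "{A \<in> red G (Suc n). mmod (L^n) A = B} = f ` red (K n) (Suc n)"
  proof
    show "f ` red (K n) (Suc n) \<subseteq> {A \<in> red G (Suc n). mmod (L^n) A = B}"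
    proof
      fix A assume "A \<in> f ` red (K n) (Suc n)"
      then obtain Q where Q: "Q \<in> K n" "A = f (Q (Suc n))" unfolding red_def by blast
      have QG: "Q \<in> G" using Q(1) KG by blast
      have MQ: "lmult l M Q \<in> G" by (rule G_mult[OF M(1) QG])
      have A1: "A = lmult l M Q (Suc n)" unfolding Q(2) f_def lmult_def ..
      have "mmod (L^n) A = lmult l M Q n" unfolding A1 by (rule Zl_matsD[OF lmult_closed[OF G_Z[OF M(1)] G_Z[OF QG]], symmetric])
      also have "\<dots> = mmod (L^n) (mmul (M n) (lone l n))" using Q(1) unfolding lmult_def K_def by simp
      also have "\<dots> = B" unfolding lone_def using M red_norm[OF B] by (simp add: mmod_mmul_right)
      finally show "A \<in> {A \<in> red G (Suc n). mmod (L^n) A = B}" using A1 MQ unfolding red_def by blast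
    qed
  next
    show "{A \<in> red G (Suc n). mmod (L^n) A = B} \<subseteq> f ` red (K n) (Suc n)"
    proof
      fix A assume A: "A \<in> {A \<in> red G (Suc n). mmod (L^n) A = B}"
      then obtain N where N: "N \<in> G" "A = N (Suc n)" unfolding red_def by blast
      have Nn: "N n = B" using A N Zl_matsD[OF G_Z[OF N(1)], of n] by simp
      define Q where "Q = lmult l h N"
      have QG: "Q \<in> G" unfolding Q_def by (rule G_mult[OF h(1) N(1)])
      have "Q n = mmod (L^n) (mmul (h n) (M n))" unfolding Q_def lmult_def Nn M(2) ..
      also have "\<dots> = lone l n" using fun_cong[OF h(3), of n] unfolding lmult_def by simp
      finally have QK: "Q \<in> K n" unfolding K_def using QG G_C by blast
      have "lmult l M Q = lmult l (lmult l M h) N" unfolding Q_def by (simp add: lmult_assoc)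
      also have "\<dots> = N" using h(2) lone_left G_Z[OF N(1)] by simp
      finally have MQN: "lmult l M Q = N" .
      have "A = lmult l M Q (Suc n)" using N(2) MQN by simp
      also have "\<dots> = f (Q (Suc n))" unfolding f_def lmult_def ..
      finally have "A = f (Q (Suc n))" .
      then show "A \<in> f ` red (K n) (Suc n)" using QK unfolding red_def by blast
    qed
  qed
  have inj: "inj_on f (red (K n) (Suc n))"
  proof
    fix E E' assume E: "E \<in> red (K n) (Suc n)" and E': "E' \<in> red (K n) (Suc n)" and eq: "f E = f E'"
    have nE: "mmod (L^Suc n) E = E" if "E \<in> red (K n) (Suc n)" for E
      using that unfolding red_def using K_Z Zl_mats_norm by blast
    have inv: "mmod (L^Suc n) (mmul (h (Suc n)) (f E)) = E" if "E \<in> red (K n) (Suc n)" for E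
    proof -
      have "mmod (L^Suc n) (mmul (h (Suc n)) (f E)) = mmod (L^Suc n) (mmul (mmul (h (Suc n)) (M (Suc n))) E)"
        unfolding f_def by (simp add: mmod_mmul_right mmul_assoc)
      also have "\<dots> = mmod (L^Suc n) (mmul (lmult l h M (Suc n)) E)"
        unfolding lmult_def by (simp add: mmod_mmul_left)
      also have "\<dots> = E" unfolding h(3) lone_def using nE[OF that] by (simp add: mmod_mmul_left)
      finally show ?thesis .
    qed
    show "E = E'" using inv[OF E] inv[OF E'] eq by simp
  qed
  have "card {A \<in> red G (Suc n). mmod (L^n) A = B} = card (red (K n) (Suc n))"
    unfolding fib by (rule card_image[OF inj])
  then show ?thesis using K_card[OF n] by simp
qed

lemma card_red_Suc: assumes n: "n > 0" and KG: "K n \<subseteq> G"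
  shows "card (red G (Suc n)) = l^2 * card (red G n)"
proof -
  have U: "red G (Suc n) = (\<Union>B\<in>red G n. {A \<in> red G (Suc n). mmod (L^n) A = B})"
  proof
    show "red G (Suc n) \<subseteq> (\<Union>B\<in>red G n. {A \<in> red G (Suc n). mmod (L^n) A = B})"
    proof
      fix A assume A: "A \<in> red G (Suc n)"
      then obtain N where N: "N \<in> G" "A = N (Suc n)" unfolding red_def by blast
      have "mmod (L^n) A = N n" using N Zl_matsD[OF G_Z[OF N(1)], of n] by simp
      then show "A \<in> (\<Union>B\<in>red G n. {A \<in> red G (Suc n). mmod (L^n) A = B})"
        using A N(1) unfolding red_def by blast
    qed
  next
    show "(\<Union>B\<in>red G n. {A \<in> red G (Suc n). mmod (L^n) A = B}) \<subseteq> red G (Suc n)" by (rule UN_least) (rule subsetI, simp)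
  qed
  have "card (red G (Suc n)) = card (\<Union>B\<in>red G n. {A \<in> red G (Suc n). mmod (L^n) A = B})"
    by (rule arg_cong[OF U])
  also have "\<dots> = (\<Sum>B\<in>red G n. card {A \<in> red G (Suc n). mmod (L^n) A = B})"
  proof (rule card_UN_disjoint)
    show "finite (red G n)" by (rule redG_finite)
    show "\<forall>B\<in>red G n. finite {A \<in> red G (Suc n). mmod (L^n) A = B}"
      using redG_finite[of "Suc n"] by simp
    show "\<forall>B\<in>red G n. \<forall>B'\<in>red G n. B \<noteq> B' \<longrightarrow>
       {A \<in> red G (Suc n). mmod (L^n) A = B} \<inter> {A \<in> red G (Suc n). mmod (L^n) A = B'} = {}"
      by blast
  qed
  also have "\<dots> = (\<Sum>B\<in>red G n. l^2)" using fiber[OF n KG] by simp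
  finally show ?thesis by simp
qed

end


lemma frac_eq_iff: "frac (x::rat) = frac y \<longleftrightarrow> x - y \<in> \<int>"
proof
  assume "frac x = frac y"
  then obtain n where "x = y + of_int n" by (rule frac_eqE)
  then show "x - y \<in> \<int>" by simp
next
  assume "x - y \<in> \<int>"
  then obtain n where "x - y = of_int n" by (auto elim: Ints_cases)
  then have "x = y + of_int n" by (simp add: algebra_simps)
  then show "frac x = frac y" by simp
qed

lemma ratdiv_Ints: assumes "m > 0" shows "(of_int z / of_int m :: rat) \<in> \<int> \<longleftrightarrow> m dvd z"
proof
  assume "(of_int z / of_int m :: rat) \<in> \<int>"
  then obtain q where q: "of_int z / of_int m = (of_int q :: rat)" unfolding Ints_def by blast
  then have "(of_int z :: rat) = of_int q * of_int m" using assms by (simp add: field_simps)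
  then have "z = q * m" by (metis of_int_eq_iff of_int_mult)
  then show "m dvd z" by simp
next
  assume "m dvd z"
  then obtain q where zq: "z = m * q" by blast
  have "(of_int z :: rat) / of_int m = of_int q" unfolding zq using assms by simp
  then show "(of_int z / of_int m :: rat) \<in> \<int>" unfolding Ints_def by blast
qed

context cset begin

definition pt :: "nat \<Rightarrow> int \<Rightarrow> int \<Rightarrow> rat \<times> rat" where
  "pt k w1 w2 = (frac (of_int w1 / of_int (L ^ k)), frac (of_int w2 / of_int (L ^ k)))"

definition add2 :: "rat \<times> rat \<Rightarrow> rat \<times> rat \<Rightarrow> rat \<times> rat" where
  "add2 = (\<lambda>(x, y) (x', y'). (frac (x + x'), frac (y + y')))"

lemma frac_div_eq: "frac (of_int x / of_int (L^k) :: rat) = frac (of_int y / of_int (L^k)) \<longleftrightarrow> [x = y] (mod L^k)"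
proof -
  have "(of_int x / of_int (L^k) :: rat) - of_int y / of_int (L^k) = of_int (x - y) / of_int (L^k)"
    by (simp add: diff_divide_distrib)
  then show ?thesis unfolding frac_eq_iff using ratdiv_Ints[OF Lpos[of k], of "x - y"]
    by (simp add: cong_iff_dvd_diff)
qed

lemma pt_eq: "pt k x1 x2 = pt k y1 y2 \<longleftrightarrow> [x1 = y1] (mod L^k) \<and> [x2 = y2] (mod L^k)"
  unfolding pt_def using frac_div_eq by simp

lemma div_shift: "(of_int x / of_int (L^k) :: rat) = of_int (L^j * x) / of_int (L^(k+j))"
  using Lpos[of j] Lpos[of k] by (simp add: power_add field_simps)

lemma pt_shift: "pt k x1 x2 = pt (k+j) (L^j * x1) (L^j * x2)"
  unfolding pt_def by (simp only: div_shift[of x1 k j] div_shift[of x2 k j])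

lemma pt_shift': "k \<le> m \<Longrightarrow> pt k x1 x2 = pt m (L^(m-k) * x1) (L^(m-k) * x2)"
  using pt_shift[of k x1 x2 "m-k"] by simp

lemma pt_add: "add2 (pt k x1 x2) (pt k y1 y2) = pt k (x1 + y1) (x2 + y2)"
  unfolding pt_def add2_def by (simp add: add_divide_distrib)

lemma pt_zero: "pt k 0 0 = (0,0)" unfolding pt_def by simp

lemma pt_0: "pt 0 x y = (0,0)" unfolding pt_def by simp

definition cnd :: "mat4 \<Rightarrow> nat \<Rightarrow> int \<Rightarrow> int \<Rightarrow> bool" where
  "cnd A k w1 w2 = (case A of (a, b, c, e) \<Rightarrow>
         ((a - 1) * w1 + b * w2) mod (L ^ k) = 0 \<and> (c * w1 + (e - 1) * w2) mod (L ^ k) = 0)"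

lemma ker_set_eq: "ker_set l M = {pt k w1 w2 | k w1 w2. cnd (M k) k w1 w2}"
  unfolding ker_set_def pt_def cnd_def ..

lemma cnd_simp: "cnd (a,b,c,e) k w1 w2 \<longleftrightarrow> [(a - 1) * w1 + b * w2 = 0] (mod L^k) \<and> [c * w1 + (e - 1) * w2 = 0] (mod L^k)"
  unfolding cnd_def cong_def by simp

lemma cnd_mmod: "cnd (mmod (L^k) A) k w1 w2 \<longleftrightarrow> cnd A k w1 w2"
proof (cases A)
  case (fields a b c e)
  have h: "[x mod m = x] (mod m)" for x m :: int by (simp add: cong_def)
  have "[(a mod L^k - 1) * w1 + b mod L^k * w2 = (a - 1) * w1 + b * w2] (mod L^k)"
    using h by (intro cong_add cong_mult cong_diff cong_refl) auto
  moreover have "[c mod L^k * w1 + (e mod L^k - 1) * w2 = c * w1 + (e - 1) * w2] (mod L^k)"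
    using h by (intro cong_add cong_mult cong_diff cong_refl) auto
  ultimately show ?thesis unfolding fields mmod_simp cnd_simp
    by (meson cong_sym cong_trans)
qed

lemma cnd_cong: assumes "[w1 = v1] (mod L^k)" "[w2 = v2] (mod L^k)"
  shows "cnd A k w1 w2 \<longleftrightarrow> cnd A k v1 v2"
proof (cases A)
  case (fields a b c e)
  have "[(a - 1) * w1 + b * w2 = (a - 1) * v1 + b * v2] (mod L^k)"
    using assms by (intro cong_add cong_mult cong_refl) auto
  moreover have "[c * w1 + (e - 1) * w2 = c * v1 + (e - 1) * v2] (mod L^k)"
    using assms by (intro cong_add cong_mult cong_refl) auto
  ultimately show ?thesis unfolding fields cnd_simp by (meson cong_sym cong_trans)
qed

lemma cnd_mult_pow: "cnd A (k+j) (L^j * w1) (L^j * w2) \<longleftrightarrow> cnd A k w1 w2"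
proof (cases A)
  case (fields a b c e)
  have p: "L^j > 0" using Lpos by simp
  have e1: "(a - 1) * (L^j * w1) + b * (L^j * w2) = L^j * ((a - 1) * w1 + b * w2)" by (simp add: algebra_simps)
  have e2: "c * (L^j * w1) + (e - 1) * (L^j * w2) = L^j * (c * w1 + (e - 1) * w2)" by (simp add: algebra_simps)
  have d: "[L^j * x = 0] (mod L^(k+j)) \<longleftrightarrow> [x = 0] (mod L^k)" for x
    using p l2 by (simp add: cong_0_iff power_add mult.commute)
  show ?thesis unfolding fields cnd_simp e1 e2 d ..
qed

lemma cnd_shift: assumes M: "M \<in> Zl_mats l"
  shows "cnd (M (k+j)) (k+j) (L^j * w1) (L^j * w2) \<longleftrightarrow> cnd (M k) k w1 w2"
proof -
  have "M k = mmod (L^k) (M (k+j))" using Zl_mats_le[OF M, of k "k+j"] by simp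
  then have "cnd (M k) k w1 w2 = cnd (M (k+j)) k w1 w2" using cnd_mmod by simp
  then show ?thesis using cnd_mult_pow by simp
qed

lemma MT: assumes M: "M \<in> Zl_mats l"
  shows "pt k w1 w2 \<in> ker_set l M \<longleftrightarrow> cnd (M k) k w1 w2"
proof
  assume "pt k w1 w2 \<in> ker_set l M"
  then obtain k' x1 x2 where e: "pt k w1 w2 = pt k' x1 x2" and c: "cnd (M k') k' x1 x2"
    unfolding ker_set_eq by blast
  show "cnd (M k) k w1 w2"
  proof (cases "k \<le> k'")
    case True
    then obtain j where j: "k' = k + j" using le_Suc_ex by blast
    have "pt k' (L^j * w1) (L^j * w2) = pt k' x1 x2" using e pt_shift[of k w1 w2 j] j by simp
    then have "cnd (M k') k' (L^j * w1) (L^j * w2)" using c cnd_cong unfolding pt_eq by blast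
    then show ?thesis using cnd_shift[OF M] j by simp
  next
    case False
    then obtain j where j: "k = k' + j" by (metis le_Suc_ex nat_le_linear)
    have "cnd (M k) k (L^j * x1) (L^j * x2)" using c cnd_shift[OF M] j by simp
    moreover have "pt k w1 w2 = pt k (L^j * x1) (L^j * x2)" using e pt_shift[of k' x1 x2 j] j by simp
    ultimately show ?thesis using cnd_cong unfolding pt_eq by blast
  qed
next
  assume "cnd (M k) k w1 w2"
  then show "pt k w1 w2 \<in> ker_set l M" unfolding ker_set_eq by blast
qed

lemma ker_pt: "v \<in> ker_set l M \<Longrightarrow> \<exists>k w1 w2. v = pt k w1 w2"
  unfolding ker_set_eq by blast

lemma ker_pt_ge: assumes "v \<in> ker_set l M" obtains k w1 w2 where "v = pt k w1 w2" "k \<ge> m"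
proof -
  obtain k w1 w2 where v: "v = pt k w1 w2" using ker_pt[OF assms] by blast
  have "v = pt (k + m) (L^m * w1) (L^m * w2)" using v pt_shift by simp
  then show ?thesis using that[of "k+m"] by simp
qed

lemma ker_add: assumes M: "M \<in> Zl_mats l" and v: "v \<in> ker_set l M" and v': "v' \<in> ker_set l M"
  shows "add2 v v' \<in> ker_set l M"
proof -
  obtain k w1 w2 where a: "v = pt k w1 w2" using ker_pt[OF v] by blast
  obtain k' x1 x2 where b: "v' = pt k' x1 x2" using ker_pt[OF v'] by blast
  have a': "v = pt (k + k') (L^k' * w1) (L^k' * w2)" using a pt_shift by simp
  have b': "v' = pt (k + k') (L^k * x1) (L^k * x2)" using b pt_shift[of k' x1 x2 k] by (simp add: add.commute)
  have c1: "cnd (M (k+k')) (k+k') (L^k' * w1) (L^k' * w2)" using v a' MT[OF M] by simp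
  have c2: "cnd (M (k+k')) (k+k') (L^k * x1) (L^k * x2)" using v' b' MT[OF M] by simp
  have "cnd (M (k+k')) (k+k') (L^k' * w1 + L^k * x1) (L^k' * w2 + L^k * x2)"
  proof (cases "M (k+k')")
    case (fields a b c e)
    have s1: "(a - 1) * (L^k' * w1 + L^k * x1) + b * (L^k' * w2 + L^k * x2) =
       ((a - 1) * (L^k' * w1) + b * (L^k' * w2)) + ((a - 1) * (L^k * x1) + b * (L^k * x2))" by (simp add: algebra_simps)
    have s2: "c * (L^k' * w1 + L^k * x1) + (e - 1) * (L^k' * w2 + L^k * x2) =
       (c * (L^k' * w1) + (e - 1) * (L^k' * w2)) + (c * (L^k * x1) + (e - 1) * (L^k * x2))" by (simp add: algebra_simps)
    show ?thesis using c1 c2 unfolding fields cnd_simp s1 s2 using cong_add[of _ 0 _ _ 0] by fastforce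
  qed
  then show ?thesis unfolding a' b' pt_add using MT[OF M] by simp
qed

lemma ker_zero: "(0,0) \<in> ker_set l M"
proof -
  have "cnd (M 0) 0 0 0" unfolding cnd_def by (cases "M 0") simp
  then have "pt 0 0 0 \<in> ker_set l M" unfolding ker_set_eq by blast
  then show ?thesis using pt_0 by simp
qed

end


context cset begin

definition Prd where "Prd a c = integer_mod_group (l^a) \<times>\<times> integer_mod_group (l^c)"

lemma Lpow_ne0: "l ^ a \<noteq> 0" using l2 by simp

lemma Prd_carrier: "carrier (Prd a c) = {0..<L^a} \<times> {0..<L^c}"
proof -
  have "l ^ a \<noteq> 0" "l ^ c \<noteq> 0" using Lpow_ne0 by auto
  then show ?thesis unfolding Prd_def carrier_DirProd carrier_integer_mod_group using l2 by simp
qed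

lemma Prd_mult: "(i, j) \<otimes>\<^bsub>Prd a c\<^esub> (i', j') = ((i + i') mod L^a, (j + j') mod L^c)"
  unfolding Prd_def by simp

lemma Prd_group: "group (Prd a c)"
  unfolding Prd_def by (intro DirProd_group group_integer_mod_group)

lemma KG_carrier: "carrier (ker_group l M) = ker_set l M" by (simp add: ker_group_def)
lemma KG_mult: "x \<otimes>\<^bsub>ker_group l M\<^esub> y = add2 x y" by (simp add: ker_group_def add2_def)

definition Phi where "Phi k U1 U2 V1 V2 i j = pt k (i*U1 + j*V1) (i*U2 + j*V2)"

definition IB where "IB a c k U1 U2 V1 V2 A \<longleftrightarrow>
   [L^a * U1 = 0] (mod L^k) \<and> [L^a * U2 = 0] (mod L^k) \<and> [L^c * V1 = 0] (mod L^k) \<and> [L^c * V2 = 0] (mod L^k) \<and>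
   bij_betw (\<lambda>(i,j). Phi k U1 U2 V1 V2 i j) ({0..<L^a} \<times> {0..<L^c}) A"

lemma mod_mult_cong0: fixes m U q x :: int assumes "[m * U = 0] (mod q)" shows "[(x mod m) * U = x * U] (mod q)"
proof -
  have "(x mod m) * U = x * U - (x div m) * (m * U)" by (simp add: algebra_simps minus_div_mult_eq_mod[symmetric])
  moreover have "[x * U - (x div m) * (m * U) = x * U - (x div m) * 0] (mod q)"
    using assms by (intro cong_diff cong_refl cong_mult) auto
  ultimately show ?thesis by simp
qed

lemma Phi_mod: assumes "[L^a * U1 = 0] (mod L^k)" "[L^a * U2 = 0] (mod L^k)" "[L^c * V1 = 0] (mod L^k)" "[L^c * V2 = 0] (mod L^k)"
  shows "Phi k U1 U2 V1 V2 (i mod L^a) (j mod L^c) = Phi k U1 U2 V1 V2 i j"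
  unfolding Phi_def pt_eq using assms
  by (auto intro!: cong_add mod_mult_cong0)

lemma Phi_add: "add2 (Phi k U1 U2 V1 V2 i j) (Phi k U1 U2 V1 V2 i' j') = Phi k U1 U2 V1 V2 (i + i') (j + j')"
  unfolding Phi_def pt_add by (simp add: algebra_simps)

lemma IB_imp_iso: assumes "IB a c k U1 U2 V1 V2 (ker_set l M)"
  shows "ker_group l M \<cong> Prd a c"
proof -
  define F where "F = (\<lambda>(i,j). Phi k U1 U2 V1 V2 i j)"
  have c: "[L^a * U1 = 0] (mod L^k)" "[L^a * U2 = 0] (mod L^k)" "[L^c * V1 = 0] (mod L^k)" "[L^c * V2 = 0] (mod L^k)"
    and b: "bij_betw F ({0..<L^a} \<times> {0..<L^c}) (ker_set l M)" using assms unfolding IB_def F_def by auto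
  have "F \<in> hom (Prd a c) (ker_group l M)"
  proof (rule homI)
    fix x assume "x \<in> carrier (Prd a c)"
    then show "F x \<in> carrier (ker_group l M)" using b unfolding Prd_carrier KG_carrier bij_betw_def by blast
  next
    fix x y assume "x \<in> carrier (Prd a c)" "y \<in> carrier (Prd a c)"
    obtain i j where x: "x = (i,j)" by (cases x)
    obtain i' j' where y: "y = (i',j')" by (cases y)
    show "F (x \<otimes>\<^bsub>Prd a c\<^esub> y) = F x \<otimes>\<^bsub>ker_group l M\<^esub> F y"
      unfolding x y Prd_mult KG_mult F_def using Phi_mod[OF c] Phi_add by simp
  qed
  then have "F \<in> iso (Prd a c) (ker_group l M)" using b unfolding Prd_carrier KG_carrier
    by (intro isoI) (auto simp: Prd_carrier KG_carrier)
  then have "inv_into (carrier (Prd a c)) F \<in> iso (ker_group l M) (Prd a c)"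
    by (rule group.iso_set_sym[OF Prd_group])
  then show ?thesis by (rule is_isoI)
qed

end


lemma small_dvd: fixes x m :: int assumes "0 \<le> x" "x < m" "m dvd x" shows "x = 0"
  using assms by (cases "x = 0") (auto dest: zdvd_imp_le)

lemma double_mod: fixes x m :: int assumes "0 \<le> x" "x < m" "(x + x) mod m = x" shows "x = 0"
proof -
  have "[x + x = x] (mod m)" using assms(3) assms(1,2) by (simp add: cong_def)
  then have "m dvd x" by (simp add: cong_iff_dvd_diff)
  then show ?thesis using small_dvd assms by blast
qed

context cset begin

lemma Lpow_gt1: "a \<ge> 1 \<Longrightarrow> L^a > 1"
proof -
  assume "a \<ge> 1"
  then have "L^a \<ge> L" using l2 by (simp add: self_le_power)
  then show ?thesis using l2 by linarith
qed

lemma iso_imp_IB: assumes M: "M \<in> Zl_mats l" and a: "a \<ge> 1" and c: "c \<ge> 1" and iso: "ker_group l M \<cong> Prd a c"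
  shows "\<exists>k U1 U2 V1 V2. IB a c k U1 U2 V1 V2 (ker_set l M)"
proof -
  obtain h where h: "h \<in> iso (ker_group l M) (Prd a c)" using iso unfolding is_iso_def by blast
  have hom: "h (add2 x y) = h x \<otimes>\<^bsub>Prd a c\<^esub> h y" if "x \<in> ker_set l M" "y \<in> ker_set l M" for x y
    using h that unfolding iso_def hom_def KG_carrier KG_mult by blast
  have bij: "bij_betw h (ker_set l M) ({0..<L^a} \<times> {0..<L^c})"
    using h unfolding iso_def KG_carrier Prd_carrier by blast
  have injh: "inj_on h (ker_set l M)" using bij bij_betw_def by blast
  have hin: "h x \<in> {0..<L^a} \<times> {0..<L^c}" if "x \<in> ker_set l M" for x using bij that bij_betwE by blast
  have ga: "L^a > 1" "L^c > 1" using Lpow_gt1 a c by auto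
  define g where "g = inv_into (ker_set l M) h"
  have surj: "h ` ker_set l M = {0..<L^a} \<times> {0..<L^c}" using bij by (simp add: bij_betw_def)
  have gprop: "g y \<in> ker_set l M \<and> h (g y) = y" if y: "y \<in> {0..<L^a} \<times> {0..<L^c}" for y
  proof
    have y': "y \<in> h ` ker_set l M" using y surj by simp
    show "g y \<in> ker_set l M" unfolding g_def by (rule inv_into_into[OF y'])
    show "h (g y) = y" unfolding g_def by (rule f_inv_into_f[OF y'])
  qed
  have in10: "(1,0) \<in> {0..<L^a} \<times> {0..<L^c}" and in01: "(0,1) \<in> {0..<L^a} \<times> {0..<L^c}"
    using Lpow_gt1[OF a] Lpow_gt1[OF c] l2 by auto
  define e1 where "e1 = g (1,0)"
  define e2 where "e2 = g (0,1)"
  have e1: "e1 \<in> ker_set l M" "h e1 = (1,0)" using gprop[OF in10] unfolding e1_def by auto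
  have e2: "e2 \<in> ker_set l M" "h e2 = (0,1)" using gprop[OF in01] unfolding e2_def by auto
  obtain k1 a1 a2 where e1p: "e1 = pt k1 a1 a2" using ker_pt[OF e1(1)] by blast
  obtain k2 b1 b2 where e2p: "e2 = pt k2 b1 b2" using ker_pt[OF e2(1)] by blast
  define k where "k = k1 + k2"
  define U1 where "U1 = L^k2 * a1"
  define U2 where "U2 = L^k2 * a2"
  define V1 where "V1 = L^k1 * b1"
  define V2 where "V2 = L^k1 * b2"
  have e1k: "e1 = pt k U1 U2" unfolding e1p k_def U1_def U2_def by (rule pt_shift)
  have e2k: "e2 = pt k V1 V2" unfolding e2p k_def V1_def V2_def using pt_shift[of k2 b1 b2 k1] by (simp add: add.commute)
  let ?F = "Phi k U1 U2 V1 V2"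
  have F10: "?F 1 0 = e1" unfolding Phi_def e1k by simp
  have F01: "?F 0 1 = e2" unfolding Phi_def e2k by simp
  have F00: "?F 0 0 = (0,0)" unfolding Phi_def by (simp add: pt_zero)
  have h00: "h (0,0) = (0,0)"
  proof -
    obtain x y where xy: "h (0,0) = (x,y)" by (cases "h (0,0)")
    have r: "0 \<le> x" "x < L^a" "0 \<le> y" "y < L^c" using hin[OF ker_zero] xy by auto
    have "add2 (0,0) (0,0) = ((0::rat),(0::rat))" unfolding add2_def by simp
    then have "h (0,0) = h (0,0) \<otimes>\<^bsub>Prd a c\<^esub> h (0,0)" using hom[OF ker_zero ker_zero] by simp
    then have "(x + x) mod L^a = x" "(y + y) mod L^c = y" unfolding xy Prd_mult by auto
    then show ?thesis using double_mod r xy by metis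
  qed
  have A: "?F (int i) 0 \<in> ker_set l M \<and> h (?F (int i) 0) = (int i mod L^a, 0)" for i
  proof (induction i)
    case 0 then show ?case using F00 ker_zero h00 by simp
  next
    case (Suc i)
    have eq: "?F (int (Suc i)) 0 = add2 (?F (int i) 0) (?F 1 0)" using Phi_add[of k U1 U2 V1 V2 "int i" 0 1 0] by (simp add: add.commute)
    have k: "?F (int (Suc i)) 0 \<in> ker_set l M" unfolding eq F10 using ker_add[OF M] Suc e1 by blast
    have "h (?F (int (Suc i)) 0) = (int i mod L^a, 0) \<otimes>\<^bsub>Prd a c\<^esub> (1,0)"
      unfolding eq F10 using hom[of "?F (int i) 0" e1] Suc e1 by simp
    also have "\<dots> = (int (Suc i) mod L^a, 0)" unfolding Prd_mult by (simp add: mod_add_right_eq add.commute)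
    finally show ?case using k by simp
  qed
  have B: "?F (int i) (int j) \<in> ker_set l M \<and> h (?F (int i) (int j)) = (int i mod L^a, int j mod L^c)" for i j
  proof (induction j)
    case 0 then show ?case using A by simp
  next
    case (Suc j)
    have eq: "?F (int i) (int (Suc j)) = add2 (?F (int i) (int j)) (?F 0 1)" using Phi_add[of k U1 U2 V1 V2 "int i" "int j" 0 1] by (simp add: add.commute)
    have k: "?F (int i) (int (Suc j)) \<in> ker_set l M" unfolding eq F01 using ker_add[OF M] Suc e2 by blast
    have "h (?F (int i) (int (Suc j))) = (int i mod L^a, int j mod L^c) \<otimes>\<^bsub>Prd a c\<^esub> (0,1)"
      unfolding eq F01 using hom[of "?F (int i) (int j)" e2] Suc e2 by simp
    also have "\<dots> = (int i mod L^a, int (Suc j) mod L^c)" unfolding Prd_mult by (simp add: mod_add_right_eq add.commute)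
    finally show ?case using k by simp
  qed
  have B': "?F i j \<in> ker_set l M \<and> h (?F i j) = (i, j)" if "(i,j) \<in> {0..<L^a} \<times> {0..<L^c}" for i j
  proof -
    have r: "0 \<le> i" "i < L^a" "0 \<le> j" "j < L^c" using that by auto
    have e: "int (nat i) = i" "int (nat j) = j" using r by auto
    have m: "i mod L^a = i" "j mod L^c = j" using r by simp_all
    show ?thesis using B[of "nat i" "nat j"] unfolding e m .
  qed
  have bijF: "bij_betw (\<lambda>(i,j). ?F i j) ({0..<L^a} \<times> {0..<L^c}) (ker_set l M)"
  proof (rule bij_betw_imageI)
    show "inj_on (\<lambda>(i,j). ?F i j) ({0..<L^a} \<times> {0..<L^c})"
    proof (rule inj_onI)
      fix x y assume x: "x \<in> {0..<L^a} \<times> {0..<L^c}" and y: "y \<in> {0..<L^a} \<times> {0..<L^c}"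
        and e: "(\<lambda>(i,j). ?F i j) x = (\<lambda>(i,j). ?F i j) y"
      obtain i j where xi: "x = (i,j)" by (cases x)
      obtain i' j' where yi: "y = (i',j')" by (cases y)
      have "h (?F i j) = h (?F i' j')" using e unfolding xi yi by simp
      then show "x = y" using B'[of i j] B'[of i' j'] x y unfolding xi yi by simp
    qed
    show "(\<lambda>(i,j). ?F i j) ` ({0..<L^a} \<times> {0..<L^c}) = ker_set l M"
    proof
      show "(\<lambda>(i,j). ?F i j) ` ({0..<L^a} \<times> {0..<L^c}) \<subseteq> ker_set l M" using B' by auto
      show "ker_set l M \<subseteq> (\<lambda>(i,j). ?F i j) ` ({0..<L^a} \<times> {0..<L^c})"
      proof
        fix x assume x: "x \<in> ker_set l M"
        obtain i j where ij: "h x = (i,j)" by (cases "h x")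
        have r: "(i,j) \<in> {0..<L^a} \<times> {0..<L^c}" using hin[OF x] ij by simp
        have "h (?F i j) = h x" using B'[OF r] ij by simp
        then have "?F i j = x" using inj_onD[OF injh _ _ x] B'[OF r] by blast
        then show "x \<in> (\<lambda>(i,j). ?F i j) ` ({0..<L^a} \<times> {0..<L^c})" using r by force
      qed
    qed
  qed
  have Ba: "?F (L^a) 0 = ?F 0 0"
  proof -
    have "?F (int (l^a)) (int 0) \<in> ker_set l M" "h (?F (int (l^a)) (int 0)) = (0, 0)" using B[of "l^a" 0] by auto
    moreover have "?F 0 0 \<in> ker_set l M" "h (?F 0 0) = (0,0)" using F00 ker_zero h00 by auto
    ultimately show ?thesis using injh unfolding inj_on_def by simp
  qed
  have Bc: "?F 0 (L^c) = ?F 0 0"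
  proof -
    have "?F (int 0) (int (l^c)) \<in> ker_set l M" "h (?F (int 0) (int (l^c))) = (0, 0)" using B[of 0 "l^c"] by auto
    moreover have "?F 0 0 \<in> ker_set l M" "h (?F 0 0) = (0,0)" using F00 ker_zero h00 by auto
    ultimately show ?thesis using injh unfolding inj_on_def by simp
  qed
  have "[L^a * U1 = 0] (mod L^k)" "[L^a * U2 = 0] (mod L^k)" using Ba unfolding Phi_def pt_eq by auto
  moreover have "[L^c * V1 = 0] (mod L^k)" "[L^c * V2 = 0] (mod L^k)" using Bc unfolding Phi_def pt_eq by auto
  ultimately have "IB a c k U1 U2 V1 V2 (ker_set l M)" unfolding IB_def using bijF by blast
  then show ?thesis by blast
qed

lemma iso_iff_IB: assumes M: "M \<in> Zl_mats l" and a: "a \<ge> 1" and c: "c \<ge> 1"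
  shows "ker_group l M \<cong> Prd a c \<longleftrightarrow> (\<exists>k U1 U2 V1 V2. IB a c k U1 U2 V1 V2 (ker_set l M))"
  using iso_imp_IB[OF assms] IB_imp_iso by blast

end


context cset begin

definition Dk where "Dk k = {pt k w1 w2 | w1 w2. True}"

lemma Dk_mono: "k \<le> m \<Longrightarrow> Dk k \<subseteq> Dk m"
  unfolding Dk_def using pt_shift' by blast

lemma pt_in_D: assumes "[L^c * X1 = 0] (mod L^k)" "[L^c * X2 = 0] (mod L^k)"
  shows "pt k X1 X2 \<in> Dk c"
proof (cases "k \<le> c")
  case True then show ?thesis using Dk_mono[OF True] unfolding Dk_def by blast
next
  case False
  then obtain j where j: "k = c + j" by (metis le_Suc_ex nat_le_linear)
  have p: "L^c > 0" using Lpos by simp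
  have "L^(c+j) dvd L^c * X1" "L^(c+j) dvd L^c * X2" using assms j by (simp_all add: cong_0_iff)
  then have "L^j dvd X1" "L^j dvd X2" using p l2 by (simp_all add: power_add)
  then obtain Y1 Y2 where Y: "X1 = L^j * Y1" "X2 = L^j * Y2" by (meson dvdE)
  have "pt k X1 X2 = pt c Y1 Y2" unfolding j Y by (rule pt_shift[symmetric])
  then show ?thesis unfolding Dk_def by blast
qed

lemma Dk_image: "Dk k = (\<lambda>(w1,w2). pt k w1 w2) ` ({0..<L^k} \<times> {0..<L^k})"
proof
  show "Dk k \<subseteq> (\<lambda>(w1,w2). pt k w1 w2) ` ({0..<L^k} \<times> {0..<L^k})"
  proof
    fix v assume "v \<in> Dk k"
    then obtain w1 w2 where v: "v = pt k w1 w2" unfolding Dk_def by blast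
    have "pt k w1 w2 = pt k (w1 mod L^k) (w2 mod L^k)" unfolding pt_eq by (simp add: cong_def)
    moreover have "(w1 mod L^k, w2 mod L^k) \<in> {0..<L^k} \<times> {0..<L^k}" using Lpos[of k] by simp
    ultimately show "v \<in> (\<lambda>(w1,w2). pt k w1 w2) ` ({0..<L^k} \<times> {0..<L^k})" unfolding v by force
  qed
qed (auto simp: Dk_def)

lemma Dk_finite: "finite (Dk k)" unfolding Dk_image by simp

lemma card_box: "card ({0..<L^k} \<times> {0..<L^k}) = l^k * l^k"
  by (simp add: card_cartesian_product nat_power_eq)

lemma Dk_card: "card (Dk k) \<le> l^k * l^k"
  unfolding Dk_image using card_image_le[of "{0..<L^k} \<times> {0..<L^k}" "\<lambda>(w1,w2). pt k w1 w2"] card_box by simp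

lemma IB_D: assumes IB: "IB a c k U1 U2 V1 V2 (ker_set l M)" and ac: "a \<le> c"
  shows "ker_set l M \<subseteq> Dk c"
proof
  fix v assume v: "v \<in> ker_set l M"
  have c: "[L^a * U1 = 0] (mod L^k)" "[L^a * U2 = 0] (mod L^k)" "[L^c * V1 = 0] (mod L^k)" "[L^c * V2 = 0] (mod L^k)"
    and b: "bij_betw (\<lambda>(i,j). Phi k U1 U2 V1 V2 i j) ({0..<L^a} \<times> {0..<L^c}) (ker_set l M)"
    using IB unfolding IB_def by auto
  obtain i j where v': "v = Phi k U1 U2 V1 V2 i j" using v b unfolding bij_betw_def by force
  have e: "L^c = L^(c-a) * L^a" using ac by (simp flip: power_add)
  have "[L^c * (i*U1 + j*V1) = i * L^(c-a) * (L^a * U1) + j * (L^c * V1)] (mod L^k)" by (simp add: e algebra_simps)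
  moreover have "[i * L^(c-a) * (L^a * U1) + j * (L^c * V1) = i * L^(c-a) * 0 + j * 0] (mod L^k)"
    using c by (intro cong_add cong_mult cong_refl) auto
  ultimately have c1: "[L^c * (i*U1 + j*V1) = 0] (mod L^k)" by (simp add: cong_trans)
  have "[L^c * (i*U2 + j*V2) = i * L^(c-a) * (L^a * U2) + j * (L^c * V2)] (mod L^k)" by (simp add: e algebra_simps)
  moreover have "[i * L^(c-a) * (L^a * U2) + j * (L^c * V2) = i * L^(c-a) * 0 + j * 0] (mod L^k)"
    using c by (intro cong_add cong_mult cong_refl) auto
  ultimately have c2: "[L^c * (i*U2 + j*V2) = 0] (mod L^k)" by (simp add: cong_trans)
  show "v \<in> Dk c" unfolding v' Phi_def by (rule pt_in_D[OF c1 c2])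
qed

lemma IB_Da: assumes IB: "IB a c k U1 U2 V1 V2 (ker_set l M)" and ac: "a \<le> c"
  shows "Dk a \<subseteq> ker_set l M"
proof -
  have c: "[L^a * U1 = 0] (mod L^k)" "[L^a * U2 = 0] (mod L^k)" "[L^c * V1 = 0] (mod L^k)" "[L^c * V2 = 0] (mod L^k)"
    and b: "bij_betw (\<lambda>(i,j). Phi k U1 U2 V1 V2 i j) ({0..<L^a} \<times> {0..<L^c}) (ker_set l M)"
    using IB unfolding IB_def by auto
  define J where "J = (\<lambda>j'. L^(c-a) * j') ` {0..<L^a}"
  have e: "L^c = L^(c-a) * L^a" using ac by (simp flip: power_add)
  have Jsub: "J \<subseteq> {0..<L^c}"
  proof
    fix j assume "j \<in> J"
    then obtain j' where j'in: "j' \<in> {0..<L^a}" and jj: "j = L^(c-a) * j'" unfolding J_def by (rule imageE)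
    then have j': "j = L^(c-a) * j'" "0 \<le> j'" "j' < L^a" by auto
    have "L^(c-a) * j' < L^(c-a) * L^a" using j' Lpos[of "c-a"] by simp
    then show "j \<in> {0..<L^c}" using j' Lpos[of "c-a"] e by simp
  qed
  have injJ: "inj_on (\<lambda>j'. L^(c-a) * j') {0..<L^a}" using Lpos[of "c-a"] l2 by (intro inj_onI) simp
  have cardJ: "card J = l^a" unfolding J_def using card_image[OF injJ] by (simp add: nat_power_eq)
  define S where "S = (\<lambda>(i,j). Phi k U1 U2 V1 V2 i j) ` ({0..<L^a} \<times> J)"
  have sub: "{0..<L^a} \<times> J \<subseteq> {0..<L^a} \<times> {0..<L^c}" using Jsub by auto
  have injS: "inj_on (\<lambda>(i,j). Phi k U1 U2 V1 V2 i j) ({0..<L^a} \<times> J)"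
    using b sub unfolding bij_betw_def by (meson inj_on_subset)
  have cardS: "card S = l^a * l^a" unfolding S_def card_image[OF injS] card_cartesian_product cardJ by (simp add: nat_power_eq)
  have SK: "S \<subseteq> ker_set l M" unfolding S_def using b sub unfolding bij_betw_def by blast
  have SD: "S \<subseteq> Dk a"
  proof
    fix v assume "v \<in> S"
    then obtain i j' where v: "v = Phi k U1 U2 V1 V2 i (L^(c-a) * j')" unfolding S_def J_def by auto
    have "[L^a * (i*U1 + L^(c-a) * j' * V1) = i * (L^a * U1) + j' * (L^c * V1)] (mod L^k)" by (simp add: e algebra_simps)
    moreover have "[i * (L^a * U1) + j' * (L^c * V1) = i * 0 + j' * 0] (mod L^k)"
      using c by (intro cong_add cong_mult cong_refl) auto
    ultimately have c1: "[L^a * (i*U1 + L^(c-a) * j' * V1) = 0] (mod L^k)" by (simp add: cong_trans)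
    have "[L^a * (i*U2 + L^(c-a) * j' * V2) = i * (L^a * U2) + j' * (L^c * V2)] (mod L^k)" by (simp add: e algebra_simps)
    moreover have "[i * (L^a * U2) + j' * (L^c * V2) = i * 0 + j' * 0] (mod L^k)"
      using c by (intro cong_add cong_mult cong_refl) auto
    ultimately have c2: "[L^a * (i*U2 + L^(c-a) * j' * V2) = 0] (mod L^k)" by (simp add: cong_trans)
    show "v \<in> Dk a" unfolding v Phi_def by (rule pt_in_D[OF c1 c2])
  qed
  have "S = Dk a" using card_seteq[OF Dk_finite SD] cardS Dk_card[of a] by simp
  then show ?thesis using SK by simp
qed

lemma Da_imp_lone: assumes M: "M \<in> Zl_mats l" and a: "a \<ge> 1" and D: "Dk a \<subseteq> ker_set l M"
  shows "M a = lone l a"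
proof -
  have "pt a 1 0 \<in> ker_set l M" "pt a 0 1 \<in> ker_set l M" using D unfolding Dk_def by auto
  then have c: "cnd (M a) a 1 0" "cnd (M a) a 0 1" using MT[OF M] by auto
  obtain x y z w where Ma: "M a = (x,y,z,w)" by (cases "M a")
  have r: "x \<in> {0..<L^a}" "y \<in> {0..<L^a}" "z \<in> {0..<L^a}" "w \<in> {0..<L^a}" using Zl_range[OF M, of a] Ma by auto
  have g: "L^a > 1" by (rule Lpow_gt1[OF a])
  have cg: "[x = 1] (mod L^a)" "[y = 0] (mod L^a)" "[z = 0] (mod L^a)" "[w = 1] (mod L^a)"
    using c unfolding Ma cnd_simp by (simp_all add: cong_iff_dvd_diff cong_0_iff)
  have "x = 1" "y = 0" "z = 0" "w = 1" using cg r g by (auto simp: cong_def)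
  then show ?thesis using Ma lone_n a by simp
qed

lemma ker_same_low: assumes M: "M \<in> Zl_mats l" and M': "M' \<in> Zl_mats l" and eq: "M' (Suc c) = M (Suc c)"
  and m: "m \<le> Suc c"
  shows "pt m w1 w2 \<in> ker_set l M' \<longleftrightarrow> pt m w1 w2 \<in> ker_set l M"
proof -
  have e: "pt m w1 w2 = pt (Suc c) (L^(Suc c - m) * w1) (L^(Suc c - m) * w2)" by (rule pt_shift'[OF m])
  show ?thesis unfolding e MT[OF M] MT[OF M'] eq ..
qed

lemma cnd_scale: "cnd A k w1 w2 \<Longrightarrow> cnd A k (x * w1) (x * w2)"
proof (cases A)
  case (fields a b c e)
  assume "cnd A k w1 w2"
  then have h: "[(a - 1) * w1 + b * w2 = 0] (mod L^k)" "[c * w1 + (e - 1) * w2 = 0] (mod L^k)"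
    unfolding fields cnd_simp by auto
  have "[x * ((a - 1) * w1 + b * w2) = x * 0] (mod L^k)" "[x * (c * w1 + (e - 1) * w2) = x * 0] (mod L^k)"
    by (rule cong_scalar_left[OF h(1)], rule cong_scalar_left[OF h(2)])
  then show ?thesis unfolding fields cnd_simp by (simp add: algebra_simps)
qed

lemma ker_stable: assumes M: "M \<in> Zl_mats l" and M': "M' \<in> Zl_mats l" and eq: "M' (Suc c) = M (Suc c)"
  and D: "ker_set l M \<subseteq> Dk c"
  shows "ker_set l M' = ker_set l M"
proof -
  have claim: "\<forall>w1 w2. pt m w1 w2 \<in> ker_set l M' \<longrightarrow> pt m w1 w2 \<in> Dk c" for m
  proof (induction m rule: less_induct)
    case (less m)
    show ?case
    proof (intro allI impI)
      fix w1 w2 assume k: "pt m w1 w2 \<in> ker_set l M'"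
      show "pt m w1 w2 \<in> Dk c"
      proof (cases "m \<le> Suc c")
        case True
        then show ?thesis using ker_same_low[OF M M' eq True] k D by blast
      next
        case False
        then obtain m' where m': "m = Suc m'" "m' > c" by (cases m) auto
        have "cnd (M' (m' + 1)) (m' + 1) (L^1 * w1) (L^1 * w2)"
          using cnd_scale k MT[OF M'] m'(1) by simp
        then have "cnd (M' m') m' w1 w2" using cnd_shift[OF M'] by blast
        then have "pt m' w1 w2 \<in> ker_set l M'" using MT[OF M'] by simp
        then have "pt m' w1 w2 \<in> Dk c" using less m' by simp
        then obtain u1 u2 where u: "pt m' w1 w2 = pt c u1 u2" unfolding Dk_def by blast
        have "pt c u1 u2 = pt m' (L^(m'-c) * u1) (L^(m'-c) * u2)" using m' by (intro pt_shift') simp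
        then have cg: "[w1 = L^(m'-c) * u1] (mod L^m')" "[w2 = L^(m'-c) * u2] (mod L^m')" using u pt_eq by auto
        then obtain s1 s2 where s: "w1 = L^(m'-c) * u1 + L^m' * s1" "w2 = L^(m'-c) * u2 + L^m' * s2"
          by (metis cong_iff_lin cong_sym mult.commute)
        have e: "L^m' = L^(m'-c) * L^c" using m' by (simp flip: power_add)
        have "pt (Suc c) (u1 + L^c * s1) (u2 + L^c * s2) = pt (Suc c + (m' - c)) (L^(m'-c) * (u1 + L^c * s1)) (L^(m'-c) * (u2 + L^c * s2))"
          by (rule pt_shift)
        also have "\<dots> = pt m w1 w2" using m' unfolding s e by (simp add: algebra_simps)
        finally have pm: "pt m w1 w2 = pt (Suc c) (u1 + L^c * s1) (u2 + L^c * s2)" by simp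
        have "pt (Suc c) (u1 + L^c * s1) (u2 + L^c * s2) \<in> ker_set l M" using ker_same_low[OF M M' eq] k pm by simp
        then have "pt (Suc c) (u1 + L^c * s1) (u2 + L^c * s2) \<in> Dk c" using D by blast
        then show ?thesis using pm by simp
      qed
    qed
  qed
  show ?thesis
  proof
    show "ker_set l M' \<subseteq> ker_set l M"
    proof
      fix v assume v: "v \<in> ker_set l M'"
      then obtain m w1 w2 where vm: "v = pt m w1 w2" using ker_pt by blast
      then have "v \<in> Dk c" using claim v by blast
      then obtain u1 u2 where "v = pt c u1 u2" unfolding Dk_def by blast
      then show "v \<in> ker_set l M" using ker_same_low[OF M M' eq, of c] v by simp
    qed
    show "ker_set l M \<subseteq> ker_set l M'"
    proof
      fix v assume v: "v \<in> ker_set l M"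
      then have "v \<in> Dk c" using D by blast
      then obtain u1 u2 where "v = pt c u1 u2" unfolding Dk_def by blast
      then show "v \<in> ker_set l M'" using ker_same_low[OF M M' eq, of c] v by simp
    qed
  qed
qed

end


context cset begin

definition psim :: "mat4 \<Rightarrow> mat4" where
  "psim = (\<lambda>(a,b,c,e). (1 + L*(a-1), L*b, L*c, 1 + L*(e-1)))"

definition psi :: "ladic_mat \<Rightarrow> ladic_mat" where
  "psi M = (\<lambda>n. mmod (L^n) (psim (M n)))"

lemma psim_cong: assumes "mmod (L^n) A = mmod (L^n) B"
  shows "mmod (L^Suc n) (psim A) = mmod (L^Suc n) (psim B)"
proof (cases A; cases B)
  fix a b c e a' b' c' e' assume A: "A = (a,b,c,e)" and B: "B = (a',b',c',e')"
  have h: "[x = y] (mod L^n) \<Longrightarrow> [L * x = L * y] (mod L^Suc n)" for x y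
    by (simp add: cong_iff_dvd_diff right_diff_distrib[symmetric] mult_dvd_mono)
  have h1: "[x = y] (mod L^n) \<Longrightarrow> [1 + L * (x - 1) = 1 + L * (y - 1)] (mod L^Suc n)" for x y
  proof -
    assume "[x = y] (mod L^n)"
    then have "[x - 1 = y - 1] (mod L^n)" by (rule cong_diff[OF _ cong_refl])
    then have "[L * (x - 1) = L * (y - 1)] (mod L^Suc n)" by (rule h)
    then show ?thesis by (rule cong_add[OF cong_refl])
  qed
  from assms have "[a = a'] (mod L^n)" "[b = b'] (mod L^n)" "[c = c'] (mod L^n)" "[e = e'] (mod L^n)"
    unfolding A B mmod_eq_iff by auto
  then show ?thesis unfolding A B psim_def using h h1 by (simp add: mmod_eq_iff)
qed

lemma psi_Z: assumes M: "M \<in> Zl_mats l" shows "psi M \<in> Zl_mats l"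
  unfolding Zl_mats_def
proof (intro CollectI allI)
  fix n
  have "mmod (L^n) (psi M (Suc n)) = mmod (L^n) (psim (M (Suc n)))"
    unfolding psi_def by (rule mmod_dvd) simp
  also have "\<dots> = mmod (L^n) (mmod (L^Suc n) (psim (M (Suc n))))" by (rule mmod_dvd[symmetric]) simp
  also have "\<dots> = mmod (L^n) (mmod (L^Suc n) (psim (M n)))"
    using psim_cong[of n "M (Suc n)" "M n"] Zl_matsD[OF M, of n] by simp
  also have "\<dots> = mmod (L^n) (psim (M n))" by (rule mmod_dvd) simp
  finally show "psi M n = mmod (L^n) (psi M (Suc n))" unfolding psi_def by simp
qed

lemma psi_level: assumes M: "M \<in> Zl_mats l" shows "psi M (Suc n) = mmod (L^Suc n) (psim (M n))"
  unfolding psi_def using psim_cong[of n "M (Suc n)" "M n"] Zl_matsD[OF M, of n] by simp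

lemma cnd_psim: "cnd (psim A) (Suc k) w1 w2 \<longleftrightarrow> cnd A k w1 w2"
proof (cases A)
  case (fields a b c e)
  have e1: "(1 + L * (a - 1) - 1) * w1 + L * b * w2 = L * ((a - 1) * w1 + b * w2)" by (simp add: algebra_simps)
  have e2: "L * c * w1 + (1 + L * (e - 1) - 1) * w2 = L * (c * w1 + (e - 1) * w2)" by (simp add: algebra_simps)
  have d: "[L * x = 0] (mod L^Suc k) \<longleftrightarrow> [x = 0] (mod L^k)" for x
    using l2 by (simp add: cong_0_iff)
  show ?thesis unfolding fields psim_def cnd_simp split e1 e2 d ..
qed

lemma KR: assumes M: "M \<in> Zl_mats l"
  shows "pt (Suc k) w1 w2 \<in> ker_set l (psi M) \<longleftrightarrow> pt k w1 w2 \<in> ker_set l M"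
  unfolding MT[OF psi_Z[OF M]] MT[OF M] psi_level[OF M] cnd_mmod cnd_psim ..

lemma Phi_eq_iff: "Phi k U1 U2 V1 V2 x y = Phi k U1 U2 V1 V2 x' y' \<longleftrightarrow> Phi k U1 U2 V1 V2 (x - x') (y - y') = Phi k U1 U2 V1 V2 0 0"
proof -
  have "[x*U1 + y*V1 = x'*U1 + y'*V1] (mod L^k) \<longleftrightarrow> [(x - x')*U1 + (y - y')*V1 = 0] (mod L^k)"
    by (simp add: cong_iff_dvd_diff algebra_simps)
  moreover have "[x*U2 + y*V2 = x'*U2 + y'*V2] (mod L^k) \<longleftrightarrow> [(x - x')*U2 + (y - y')*V2 = 0] (mod L^k)"
    by (simp add: cong_iff_dvd_diff algebra_simps)
  ultimately show ?thesis unfolding Phi_def pt_eq by simp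
qed

lemma IB_zero: assumes IB: "IB a c k U1 U2 V1 V2 A" and e: "Phi k U1 U2 V1 V2 x y = Phi k U1 U2 V1 V2 0 0"
  shows "L^a dvd x \<and> L^c dvd y"
proof -
  have c: "[L^a * U1 = 0] (mod L^k)" "[L^a * U2 = 0] (mod L^k)" "[L^c * V1 = 0] (mod L^k)" "[L^c * V2 = 0] (mod L^k)"
    and b: "bij_betw (\<lambda>(i,j). Phi k U1 U2 V1 V2 i j) ({0..<L^a} \<times> {0..<L^c}) A"
    using IB unfolding IB_def by auto
  have "Phi k U1 U2 V1 V2 (x mod L^a) (y mod L^c) = Phi k U1 U2 V1 V2 0 0" using Phi_mod[OF c] e by simp
  moreover have "(x mod L^a, y mod L^c) \<in> {0..<L^a} \<times> {0..<L^c}" "(0,0) \<in> {0..<L^a} \<times> {0..<L^c}"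
    using Lpos by auto
  ultimately have "(x mod L^a, y mod L^c) = (0,0)" using b unfolding bij_betw_def inj_on_def by fastforce
  then show ?thesis by (simp add: dvd_eq_mod_eq_0)
qed

lemma IB_lift: assumes "IB a c k U1 U2 V1 V2 A" shows "IB a c (Suc k) (L*U1) (L*U2) (L*V1) (L*V2) A"
proof -
  have h: "[x = 0] (mod L^k) \<Longrightarrow> [L * x = 0] (mod L^Suc k)" for x by (simp add: cong_0_iff mult_dvd_mono)
  have c: "[L^a * U1 = 0] (mod L^k)" "[L^a * U2 = 0] (mod L^k)" "[L^c * V1 = 0] (mod L^k)" "[L^c * V2 = 0] (mod L^k)"
    and b: "bij_betw (\<lambda>(i,j). Phi k U1 U2 V1 V2 i j) ({0..<L^a} \<times> {0..<L^c}) A"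
    using assms unfolding IB_def by auto
  have "Phi k U1 U2 V1 V2 i j = Phi (Suc k) (L*U1) (L*U2) (L*V1) (L*V2) i j" for i j
    unfolding Phi_def using pt_shift[of k _ _ 1] by (simp add: algebra_simps)
  then have b': "bij_betw (\<lambda>(i,j). Phi (Suc k) (L*U1) (L*U2) (L*V1) (L*V2) i j) ({0..<L^a} \<times> {0..<L^c}) A"
    using b by simp
  have e: "L^a * (L * U1) = L * (L^a * U1)" "L^a * (L * U2) = L * (L^a * U2)"
       "L^c * (L * V1) = L * (L^c * V1)" "L^c * (L * V2) = L * (L^c * V2)" by (simp_all add: algebra_simps)
  show ?thesis unfolding IB_def e using b' h[OF c(1)] h[OF c(2)] h[OF c(3)] h[OF c(4)] by blast
qed

end


lemma dvd_small_int: fixes x m :: int assumes "m dvd x" "-m < x" "x < m" shows "x = 0"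
proof (rule ccontr)
  assume x: "x \<noteq> 0"
  have "m dvd \<bar>x\<bar>" using assms(1) by simp
  then have "m \<le> \<bar>x\<bar>" using x by (intro zdvd_imp_le) auto
  then show False using assms(2,3) by linarith
qed

context cset begin

lemma cong_mulL: "[x = y] (mod L^k) \<Longrightarrow> [L * x = L * y] (mod L^Suc k)"
  by (simp add: cong_iff_dvd_diff right_diff_distrib[symmetric] mult_dvd_mono)

lemma cong_divL: "[L * x = L * y] (mod L^Suc k) \<Longrightarrow> [x = y] (mod L^k)"
  using l2 by (simp add: cong_iff_dvd_diff right_diff_distrib[symmetric])

lemma cong_obtain: fixes w u m :: int shows "[w = u] (mod m) \<Longrightarrow> \<exists>z. w = u + m * z"
proof -
  assume "[w = u] (mod m)"
  then have "m dvd w - u" by (simp add: cong_iff_dvd_diff)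
  then obtain z where "w - u = m * z" by blast
  then show ?thesis by (intro exI[of _ z]) simp
qed

lemma pow_pred: "a \<ge> 1 \<Longrightarrow> L^a = L * L^(a-1)"
  by (metis Suc_diff_1 less_le_trans zero_less_one power_Suc)

lemma dvd_pred: assumes "a \<ge> 1" "L^a dvd L * s" shows "L^(a-1) dvd s"
  using assms l2 by (simp add: pow_pred[OF assms(1)])

lemma IB_obtain: assumes "IB a c k U1 U2 V1 V2 A" "v \<in> A"
  obtains i j where "(i,j) \<in> {0..<L^a} \<times> {0..<L^c}" "Phi k U1 U2 V1 V2 i j = v"
proof -
  have "v \<in> (\<lambda>(i,j). Phi k U1 U2 V1 V2 i j) ` ({0..<L^a} \<times> {0..<L^c})"
    using assms unfolding IB_def bij_betw_def by blast
  then obtain p where p: "p \<in> {0..<L^a} \<times> {0..<L^c}" "v = (\<lambda>(i,j). Phi k U1 U2 V1 V2 i j) p" by (rule imageE)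
  obtain i j where "p = (i,j)" by (cases p)
  then show ?thesis using that p by simp
qed

lemma T1: assumes M: "M \<in> Zl_mats l" and a: "1 \<le> a" and ac: "a \<le> c" and k: "k \<ge> 1"
  and IB: "IB a c k U1 U2 V1 V2 (ker_set l M)"
  shows "IB (Suc a) (Suc c) (Suc k) U1 U2 V1 V2 (ker_set l (psi M))"
proof -
  have c: "[L^a * U1 = 0] (mod L^k)" "[L^a * U2 = 0] (mod L^k)" "[L^c * V1 = 0] (mod L^k)" "[L^c * V2 = 0] (mod L^k)"
    and b: "bij_betw (\<lambda>(i,j). Phi k U1 U2 V1 V2 i j) ({0..<L^a} \<times> {0..<L^c}) (ker_set l M)"
    using IB unfolding IB_def by auto
  have c1: "a \<ge> 1" "c \<ge> 1" using a ac by auto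
  let ?F = "Phi k U1 U2 V1 V2" and ?F' = "Phi (Suc k) U1 U2 V1 V2"
  have c': "[L^Suc a * U1 = 0] (mod L^Suc k)" "[L^Suc a * U2 = 0] (mod L^Suc k)"
     "[L^Suc c * V1 = 0] (mod L^Suc k)" "[L^Suc c * V2 = 0] (mod L^Suc k)"
    using cong_mulL[OF c(1)] cong_mulL[OF c(2)] cong_mulL[OF c(3)] cong_mulL[OF c(4)] by (simp_all add: mult.assoc)
  have Fin: "?F i j \<in> ker_set l M" for i j
  proof -
    have "(i mod L^a, j mod L^c) \<in> {0..<L^a} \<times> {0..<L^c}" using Lpos by auto
    then have "?F (i mod L^a) (j mod L^c) \<in> ker_set l M" using b unfolding bij_betw_def by force
    then show ?thesis using Phi_mod[OF c] by simp
  qed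
  have F'in: "?F' i j \<in> ker_set l (psi M)" for i j
    using Fin[of i j] KR[OF M] unfolding Phi_def by simp
  have inj: "inj_on (\<lambda>(i,j). ?F' i j) ({0..<L^Suc a} \<times> {0..<L^Suc c})"
  proof (rule inj_onI)
    fix p p' assume p: "p \<in> {0..<L^Suc a} \<times> {0..<L^Suc c}" and p': "p' \<in> {0..<L^Suc a} \<times> {0..<L^Suc c}"
      and ep: "(\<lambda>(i,j). ?F' i j) p = (\<lambda>(i,j). ?F' i j) p'"
    obtain i j where pij: "p = (i,j)" by (cases p)
    obtain i' j' where pij': "p' = (i',j')" by (cases p')
    have r: "0 \<le> i" "i < L^Suc a" "0 \<le> j" "j < L^Suc c" "0 \<le> i'" "i' < L^Suc a" "0 \<le> j'" "j' < L^Suc c"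
      using p p' unfolding pij pij' by auto
    have e: "?F' i j = ?F' i' j'" using ep unfolding pij pij' by simp
    define x where "x = i - i'"
    define y where "y = j - j'"
    have e0: "?F' x y = ?F' 0 0" using e Phi_eq_iff unfolding x_def y_def by blast
    then have g: "[x * U1 + y * V1 = 0] (mod L^Suc k)" "[x * U2 + y * V2 = 0] (mod L^Suc k)"
      unfolding Phi_def pt_eq by auto
    have "[x * U1 + y * V1 = 0] (mod L^k)" "[x * U2 + y * V2 = 0] (mod L^k)"
      using g by (auto intro: cong_dvd_modulus[of _ _ "L^Suc k"])
    then have "?F x y = ?F 0 0" unfolding Phi_def pt_eq by simp
    then have "L^a dvd x" "L^c dvd y" using IB_zero[OF IB] by auto
    then obtain s r where sr: "x = L^a * s" "y = L^c * r" by (meson dvdE)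
    have pa: "L^a = L * L^(a-1)" "L^c = L * L^(c-1)" using pow_pred[OF c1(1)] pow_pred[OF c1(2)] by blast+
    have "[L * (L^(a-1) * s * U1 + L^(c-1) * r * V1) = L * 0] (mod L^Suc k)"
      using g(1) unfolding sr by (simp add: pa algebra_simps)
    then have y1: "[L^(a-1) * s * U1 + L^(c-1) * r * V1 = 0] (mod L^k)" by (rule cong_divL)
    have "[L * (L^(a-1) * s * U2 + L^(c-1) * r * V2) = L * 0] (mod L^Suc k)"
      using g(2) unfolding sr by (simp add: pa algebra_simps)
    then have y2: "[L^(a-1) * s * U2 + L^(c-1) * r * V2 = 0] (mod L^k)" by (rule cong_divL)
    have "?F (L^(a-1) * s) (L^(c-1) * r) = ?F 0 0" unfolding Phi_def pt_eq using y1 y2 by (simp add: algebra_simps)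
    then have "L^a dvd L^(a-1) * s" "L^c dvd L^(c-1) * r" using IB_zero[OF IB] by auto
    then have "L dvd s" "L dvd r" using pa Lpos by (auto simp: mult.commute)
    then have "L^Suc a dvd x" "L^Suc c dvd y" unfolding sr by (auto simp: mult_dvd_mono mult.commute)
    moreover have "- (L^Suc a) < x" "x < L^Suc a" "- (L^Suc c) < y" "y < L^Suc c"
      using r unfolding x_def y_def by linarith+
    ultimately have "x = 0" "y = 0" using dvd_small_int by blast+
    then show "p = p'" unfolding x_def y_def pij pij' by simp
  qed
  have surj: "ker_set l (psi M) \<subseteq> (\<lambda>(i,j). ?F' i j) ` ({0..<L^Suc a} \<times> {0..<L^Suc c})"
  proof
    fix v assume v: "v \<in> ker_set l (psi M)"
    obtain m w1 w2 where vm: "v = pt m w1 w2" "m \<ge> Suc k" using ker_pt_ge[OF v] by blast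
    obtain m'' where m'': "m = Suc m''" "m'' \<ge> k" using vm(2) by (cases m) auto
    have "pt m'' w1 w2 \<in> ker_set l M" using v KR[OF M] vm m'' by simp
    then obtain i j where ij: "(i,j) \<in> {0..<L^a} \<times> {0..<L^c}" "?F i j = pt m'' w1 w2"
      using IB_obtain[OF IB] by metis
    have "pt m'' w1 w2 = pt m'' (L^(m''-k) * (i * U1 + j * V1)) (L^(m''-k) * (i * U2 + j * V2))"
      using ij(2) pt_shift'[OF m''(2)] unfolding Phi_def by simp
    then have cg1: "[w1 = L^(m''-k) * (i * U1 + j * V1)] (mod L^m'')" and cg2: "[w2 = L^(m''-k) * (i * U2 + j * V2)] (mod L^m'')"
      unfolding pt_eq by auto
    obtain z1 where z1: "w1 = L^(m''-k) * (i * U1 + j * V1) + L^m'' * z1" using cong_obtain[OF cg1] by blast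
    obtain z2 where z2: "w2 = L^(m''-k) * (i * U2 + j * V2) + L^m'' * z2" using cong_obtain[OF cg2] by blast
    note z = z1 z2
    have "pt 1 z1 z2 \<in> Dk a" using Dk_mono[OF a] unfolding Dk_def by blast
    then have "pt 1 z1 z2 \<in> ker_set l M" using IB_Da[OF IB ac] by blast
    then obtain sa ra where sr: "(sa,ra) \<in> {0..<L^a} \<times> {0..<L^c}" "?F sa ra = pt 1 z1 z2"
      using IB_obtain[OF IB] by metis
    have "?F sa ra = pt k (L^(k-1) * z1) (L^(k-1) * z2)" using sr(2) pt_shift'[OF k] by simp
    then have g: "[sa * U1 + ra * V1 = L^(k-1) * z1] (mod L^k)" "[sa * U2 + ra * V2 = L^(k-1) * z2] (mod L^k)"
      unfolding Phi_def pt_eq by auto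
    have pk: "L^k = L * L^(k-1)" using pow_pred[OF k] by blast
    have gL: "[L * (sa * U1 + ra * V1) = L^k * z1] (mod L^Suc k)" "[L * (sa * U2 + ra * V2) = L^k * z2] (mod L^Suc k)"
      using cong_mulL[OF g(1)] cong_mulL[OF g(2)] pk by (simp_all add: mult.assoc)
    have z0: "[L * (L^(k-1) * z) = 0] (mod L^k)" for z
      unfolding cong_0_iff using pk by (simp add: mult.assoc[symmetric])
    have "[L * (sa * U1 + ra * V1) = 0] (mod L^k)"
      using cong_trans[OF cong_scalar_left[OF g(1), of L] z0] .
    moreover have "[L * (sa * U2 + ra * V2) = 0] (mod L^k)"
      using cong_trans[OF cong_scalar_left[OF g(2), of L] z0] .
    ultimately have "?F (L * sa) (L * ra) = ?F 0 0" unfolding Phi_def pt_eq by (simp add: algebra_simps)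
    then have d1: "L^a dvd L * sa" and d2: "L^c dvd L * ra" using IB_zero[OF IB] by auto
    have "L^(a-1) dvd sa" "L^(c-1) dvd ra" using dvd_pred[OF c1(1) d1] dvd_pred[OF c1(2) d2] by auto
    then obtain s0 r0 where sg: "sa = L^(a-1) * s0" "ra = L^(c-1) * r0" by (meson dvdE)
    have pa: "L^a = L * L^(a-1)" "L^c = L * L^(c-1)" using pow_pred[OF c1(1)] pow_pred[OF c1(2)] by blast+
    have pp: "L^(a-1) > 0" "L^(c-1) > 0" using Lpos by auto
    have sr1: "0 \<le> L^(a-1) * s0" "L^(a-1) * s0 < L^(a-1) * L" "0 \<le> L^(c-1) * r0" "L^(c-1) * r0 < L^(c-1) * L"
      using sr(1) unfolding sg pa by (auto simp: mult.commute)
    have sgr: "0 \<le> s0" "s0 < L" "0 \<le> r0" "r0 < L"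
    proof -
      show "0 \<le> s0"
      proof (rule ccontr)
        assume "\<not> 0 \<le> s0"
        then have "L^(a-1) * s0 < 0" using pp(1) by (simp add: mult_pos_neg)
        then show False using sr1(1) by linarith
      qed
      show "s0 < L" using sr1(2) pp(1) by (simp add: mult_less_cancel_left_pos)
      show "0 \<le> r0"
      proof (rule ccontr)
        assume "\<not> 0 \<le> r0"
        then have "L^(c-1) * r0 < 0" using pp(2) by (simp add: mult_pos_neg)
        then show False using sr1(3) by linarith
      qed
      show "r0 < L" using sr1(4) pp(2) by (simp add: mult_less_cancel_left_pos)
    qed
    define i2 where "i2 = i + L^a * s0"
    define j2 where "j2 = j + L^c * r0"
    have r2: "(i2, j2) \<in> {0..<L^Suc a} \<times> {0..<L^Suc c}"
    proof -
      have m1: "L^a * s0 \<le> L^a * (L - 1)" "L^c * r0 \<le> L^c * (L - 1)"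
        using sgr Lpos[of a] Lpos[of c] by (auto intro!: mult_left_mono)
      have e1: "L^a * (L - 1) = L^Suc a - L^a" "L^c * (L - 1) = L^Suc c - L^c" by (simp_all add: algebra_simps)
      have "0 \<le> L^a * s0" "0 \<le> L^c * r0" using sgr Lpos[of a] Lpos[of c] by auto
      then show ?thesis using ij(1) m1 e1 unfolding i2_def j2_def by auto
    qed
    have Lsig: "L * sa = L^a * s0" "L * ra = L^c * r0" unfolding sg pa by (simp_all add: mult.assoc)
    have "[i * U1 + j * V1 + L^k * z1 = i2 * U1 + j2 * V1] (mod L^Suc k)"
    proof -
      have "[i * U1 + j * V1 + L^k * z1 = i * U1 + j * V1 + L * (sa * U1 + ra * V1)] (mod L^Suc k)"
        by (rule cong_add[OF cong_refl cong_sym[OF gL(1)]])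
      moreover have "i2 * U1 + j2 * V1 = i * U1 + j * V1 + L * (sa * U1 + ra * V1)"
      proof -
        have "i2 * U1 + j2 * V1 = i * U1 + j * V1 + ((L^a * s0) * U1 + (L^c * r0) * V1)"
          unfolding i2_def j2_def by (simp add: algebra_simps)
        also have "\<dots> = i * U1 + j * V1 + ((L * sa) * U1 + (L * ra) * V1)" unfolding Lsig ..
        also have "\<dots> = i * U1 + j * V1 + L * (sa * U1 + ra * V1)" by (simp add: algebra_simps)
        finally show ?thesis .
      qed
      ultimately show ?thesis by simp
    qed
    moreover have "[i * U2 + j * V2 + L^k * z2 = i2 * U2 + j2 * V2] (mod L^Suc k)"
    proof -
      have "[i * U2 + j * V2 + L^k * z2 = i * U2 + j * V2 + L * (sa * U2 + ra * V2)] (mod L^Suc k)"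
        by (rule cong_add[OF cong_refl cong_sym[OF gL(2)]])
      moreover have "i2 * U2 + j2 * V2 = i * U2 + j * V2 + L * (sa * U2 + ra * V2)"
      proof -
        have "i2 * U2 + j2 * V2 = i * U2 + j * V2 + ((L^a * s0) * U2 + (L^c * r0) * V2)"
          unfolding i2_def j2_def by (simp add: algebra_simps)
        also have "\<dots> = i * U2 + j * V2 + ((L * sa) * U2 + (L * ra) * V2)" unfolding Lsig ..
        also have "\<dots> = i * U2 + j * V2 + L * (sa * U2 + ra * V2)" by (simp add: algebra_simps)
        finally show ?thesis .
      qed
      ultimately show ?thesis by simp
    qed
    ultimately have e1: "pt (Suc k) (i * U1 + j * V1 + L^k * z1) (i * U2 + j * V2 + L^k * z2) = ?F' i2 j2"
      unfolding Phi_def pt_eq by simp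
    have pm: "L^m'' = L^(m''-k) * L^k" using m'' by (simp flip: power_add)
    have "v = pt (Suc k) (i * U1 + j * V1 + L^k * z1) (i * U2 + j * V2 + L^k * z2)"
    proof -
      have "pt (Suc k) (i * U1 + j * V1 + L^k * z1) (i * U2 + j * V2 + L^k * z2)
           = pt (Suc k + (m'' - k)) (L^(m''-k) * (i * U1 + j * V1 + L^k * z1)) (L^(m''-k) * (i * U2 + j * V2 + L^k * z2))"
        by (rule pt_shift)
      also have "\<dots> = pt m w1 w2"
      proof -
        have q1: "Suc k + (m'' - k) = m" using m'' by simp
        have q2: "L^(m''-k) * (i * U1 + j * V1 + L^k * z1) = w1" unfolding z1 pm by (simp add: algebra_simps)
        have q3: "L^(m''-k) * (i * U2 + j * V2 + L^k * z2) = w2" unfolding z2 pm by (simp add: algebra_simps)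
        show ?thesis unfolding q1 q2 q3 ..
      qed
      finally show ?thesis using vm by simp
    qed
    then have "v = (\<lambda>(i,j). ?F' i j) (i2, j2)" using e1 by simp
    then show "v \<in> (\<lambda>(i,j). ?F' i j) ` ({0..<L^Suc a} \<times> {0..<L^Suc c})" using r2 by (rule image_eqI)
  qed
  have im: "(\<lambda>(i,j). ?F' i j) ` ({0..<L^Suc a} \<times> {0..<L^Suc c}) = ker_set l (psi M)"
  proof
    show "(\<lambda>(i,j). ?F' i j) ` ({0..<L^Suc a} \<times> {0..<L^Suc c}) \<subseteq> ker_set l (psi M)"
      using F'in by (auto simp: image_subset_iff)
  qed (rule surj)
  have "bij_betw (\<lambda>(i,j). ?F' i j) ({0..<L^Suc a} \<times> {0..<L^Suc c}) (ker_set l (psi M))"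
    by (rule bij_betw_imageI[OF inj im])
  then show ?thesis unfolding IB_def using c' by blast
qed

end


context cset begin

lemma T2: assumes M: "M \<in> Zl_mats l" and a: "1 \<le> a" and ac: "a \<le> c"
  and IB': "IB (Suc a) (Suc c) (Suc k) U1 U2 V1 V2 (ker_set l (psi M))"
  shows "IB a c k U1 U2 V1 V2 (ker_set l M)"
proof -
  have c': "[L^Suc a * U1 = 0] (mod L^Suc k)" "[L^Suc a * U2 = 0] (mod L^Suc k)"
       "[L^Suc c * V1 = 0] (mod L^Suc k)" "[L^Suc c * V2 = 0] (mod L^Suc k)"
    using IB' unfolding IB_def by auto
  have c: "[L^a * U1 = 0] (mod L^k)" "[L^a * U2 = 0] (mod L^k)" "[L^c * V1 = 0] (mod L^k)" "[L^c * V2 = 0] (mod L^k)"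
    using cong_divL[of "L^a * U1" 0 k] cong_divL[of "L^a * U2" 0 k] cong_divL[of "L^c * V1" 0 k] cong_divL[of "L^c * V2" 0 k] c'
    by (simp_all add: mult.assoc)
  let ?F = "Phi k U1 U2 V1 V2" and ?F' = "Phi (Suc k) U1 U2 V1 V2"
  have F'in: "?F' i j \<in> ker_set l (psi M)" for i j
  proof -
    obtain p where "p = (i mod L^Suc a, j mod L^Suc c)" by blast
    have "0 \<le> i mod L^Suc a" "i mod L^Suc a < L^Suc a" "0 \<le> j mod L^Suc c" "j mod L^Suc c < L^Suc c"
      by (intro pos_mod_sign pos_mod_bound Lpos)+
    then have r: "(i mod L^Suc a, j mod L^Suc c) \<in> {0..<L^Suc a} \<times> {0..<L^Suc c}" by simp
    have "(\<lambda>(i,j). ?F' i j) (i mod L^Suc a, j mod L^Suc c) \<in> ker_set l (psi M)"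
      using IB' r unfolding IB_def bij_betw_def by blast
    then show ?thesis using Phi_mod[OF c'] by simp
  qed
  have Fin: "?F i j \<in> ker_set l M" for i j
    using F'in[of i j] KR[OF M] unfolding Phi_def by simp
  have inj: "inj_on (\<lambda>(i,j). ?F i j) ({0..<L^a} \<times> {0..<L^c})"
  proof (rule inj_onI)
    fix p p' assume p: "p \<in> {0..<L^a} \<times> {0..<L^c}" and p': "p' \<in> {0..<L^a} \<times> {0..<L^c}"
      and ep: "(\<lambda>(i,j). ?F i j) p = (\<lambda>(i,j). ?F i j) p'"
    obtain i j where pij: "p = (i,j)" by (cases p)
    obtain i' j' where pij': "p' = (i',j')" by (cases p')
    have r: "0 \<le> i" "i < L^a" "0 \<le> j" "j < L^c" "0 \<le> i'" "i' < L^a" "0 \<le> j'" "j' < L^c"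
      using p p' unfolding pij pij' by auto
    have e: "?F i j = ?F i' j'" using ep unfolding pij pij' by simp
    define x where "x = i - i'"
    define y where "y = j - j'"
    have "?F x y = ?F 0 0" using e Phi_eq_iff unfolding x_def y_def by blast
    then have g: "[x * U1 + y * V1 = 0] (mod L^k)" "[x * U2 + y * V2 = 0] (mod L^k)"
      unfolding Phi_def pt_eq by auto
    obtain t1 where t1: "x * U1 + y * V1 = 0 + L^k * t1" using cong_obtain[OF g(1)] by blast
    obtain t2 where t2: "x * U2 + y * V2 = 0 + L^k * t2" using cong_obtain[OF g(2)] by blast
    have "pt (Suc k) (x * U1 + y * V1) (x * U2 + y * V2) = pt 1 t1 t2"
      using pt_shift[of 1 t1 t2 k] unfolding t1 t2 by simp
    moreover have "pt 1 t1 t2 \<in> Dk (Suc a)"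
    proof -
      have "pt 1 t1 t2 \<in> Dk 1" unfolding Dk_def by blast
      then show ?thesis using Dk_mono[of 1 "Suc a"] by auto
    qed
    ultimately have "?F' x y \<in> ker_set l (psi M)" using IB_Da[OF IB'] ac unfolding Phi_def by auto
    then obtain sa ra where sr: "(sa,ra) \<in> {0..<L^Suc a} \<times> {0..<L^Suc c}" "?F' sa ra = ?F' x y"
      using IB_obtain[OF IB'] by metis
    then have gs: "[sa * U1 + ra * V1 = x * U1 + y * V1] (mod L^Suc k)" "[sa * U2 + ra * V2 = x * U2 + y * V2] (mod L^Suc k)"
      unfolding Phi_def pt_eq by auto
    have z: "[L * (x * U1 + y * V1) = 0] (mod L^Suc k)" "[L * (x * U2 + y * V2) = 0] (mod L^Suc k)"
      unfolding t1 t2 by (simp_all add: cong_0_iff)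
    have "[L * (sa * U1 + ra * V1) = 0] (mod L^Suc k)" using cong_trans[OF cong_scalar_left[OF gs(1)] z(1)] .
    moreover have "[L * (sa * U2 + ra * V2) = 0] (mod L^Suc k)" using cong_trans[OF cong_scalar_left[OF gs(2)] z(2)] .
    ultimately have "?F' (L * sa) (L * ra) = ?F' 0 0" unfolding Phi_def pt_eq by (simp add: algebra_simps)
    then have "L^Suc a dvd L * sa \<and> L^Suc c dvd L * ra" by (rule IB_zero[OF IB'])
    then have d1: "L * L^a dvd L * sa" and d2: "L * L^c dvd L * ra" by simp_all
    have L0: "L \<noteq> 0" using l2 by simp
    have "L^a dvd sa" "L^c dvd ra" using d1 d2 unfolding dvd_times_left_cancel_iff[OF L0] by auto
    then obtain s0 r0 where sg: "sa = L^a * s0" "ra = L^c * r0" by (meson dvdE)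
    have "?F' x y = ?F' (L^a * s0) (L^c * r0)" using sr(2) sg by simp
    then have "?F' (x - L^a * s0) (y - L^c * r0) = ?F' 0 0" using Phi_eq_iff by blast
    then have "L^Suc a dvd x - L^a * s0" "L^Suc c dvd y - L^c * r0" using IB_zero[OF IB'] by auto
    then have "L^a dvd x - L^a * s0" "L^c dvd y - L^c * r0"
      by (auto intro: dvd_trans[of "L^a" "L^Suc a"] dvd_trans[of "L^c" "L^Suc c"])
    then have "L^a dvd x" "L^c dvd y" by (metis diff_add_cancel dvd_add dvd_triv_left)+
    moreover have "- (L^a) < x" "x < L^a" "- (L^c) < y" "y < L^c"
      using r unfolding x_def y_def by linarith+
    ultimately have "x = 0" "y = 0" using dvd_small_int by blast+
    then show "p = p'" unfolding x_def y_def pij pij' by simp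
  qed
  have surj: "ker_set l M \<subseteq> (\<lambda>(i,j). ?F i j) ` ({0..<L^a} \<times> {0..<L^c})"
  proof
    fix v assume v: "v \<in> ker_set l M"
    obtain m w1 w2 where vm: "v = pt m w1 w2" "m \<ge> k" using ker_pt_ge[OF v] by blast
    have "pt (Suc m) w1 w2 \<in> ker_set l (psi M)" using v KR[OF M] vm by simp
    then obtain i j where ij: "(i,j) \<in> {0..<L^Suc a} \<times> {0..<L^Suc c}" "?F' i j = pt (Suc m) w1 w2"
      using IB_obtain[OF IB'] by metis
    have "pt (Suc k) (i * U1 + j * V1) (i * U2 + j * V2) = pt (Suc m) (L^(m-k) * (i * U1 + j * V1)) (L^(m-k) * (i * U2 + j * V2))"
      using pt_shift[of "Suc k" _ _ "m - k"] vm(2) by simp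
    then have "pt (Suc m) w1 w2 = pt (Suc m) (L^(m-k) * (i * U1 + j * V1)) (L^(m-k) * (i * U2 + j * V2))"
      using ij(2) unfolding Phi_def by simp
    then have "[w1 = L^(m-k) * (i * U1 + j * V1)] (mod L^Suc m)" "[w2 = L^(m-k) * (i * U2 + j * V2)] (mod L^Suc m)"
      unfolding pt_eq by auto
    then have "[w1 = L^(m-k) * (i * U1 + j * V1)] (mod L^m)" "[w2 = L^(m-k) * (i * U2 + j * V2)] (mod L^m)"
      by (auto intro: cong_dvd_modulus[of _ _ "L^Suc m"])
    then have "v = pt m (L^(m-k) * (i * U1 + j * V1)) (L^(m-k) * (i * U2 + j * V2))"
      unfolding vm pt_eq by simp
    moreover have "pt m (L^(m-k) * (i * U1 + j * V1)) (L^(m-k) * (i * U2 + j * V2)) = ?F i j"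
      unfolding Phi_def using pt_shift'[OF vm(2)] by simp
    ultimately have "v = ?F (i mod L^a) (j mod L^c)" using Phi_mod[OF c] by simp
    then have "v = (\<lambda>(i,j). ?F i j) (i mod L^a, j mod L^c)" by simp
    moreover have "(i mod L^a, j mod L^c) \<in> {0..<L^a} \<times> {0..<L^c}" using Lpos by auto
    ultimately show "v \<in> (\<lambda>(i,j). ?F i j) ` ({0..<L^a} \<times> {0..<L^c})" by (rule image_eqI)
  qed
  have im: "(\<lambda>(i,j). ?F i j) ` ({0..<L^a} \<times> {0..<L^c}) = ker_set l M"
  proof
    show "(\<lambda>(i,j). ?F i j) ` ({0..<L^a} \<times> {0..<L^c}) \<subseteq> ker_set l M"
      using Fin by (auto simp: image_subset_iff)
  qed (rule surj)
  have "bij_betw (\<lambda>(i,j). ?F i j) ({0..<L^a} \<times> {0..<L^c}) (ker_set l M)"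
    by (rule bij_betw_imageI[OF inj im])
  then show ?thesis unfolding IB_def using c by blast
qed

end


definition madd :: "mat4 \<Rightarrow> mat4 \<Rightarrow> mat4" where
  "madd = (\<lambda>(a,b,c,d) (e,f,g,h). (a+e, b+f, c+g, d+h))"

lemma madd_simp: "madd (a,b,c,d) (e,f,g,h) = (a+e, b+f, c+g, d+h)" by (simp add: madd_def)
lemma msc_simp: "msc k (a,b,c,d) = (k*a, k*b, k*c, k*d)" by (simp add: msc_def)

lemma mmod_lin_cong: assumes "mmod m A = mmod m A'" "mmod m B = mmod m B'"
  shows "mmod m (madd (msc u A) (msc v B)) = mmod m (madd (msc u A') (msc v B'))"
proof (cases A; cases A'; cases B; cases B')
  fix a1 a2 a3 a4 b1 b2 b3 b4 c1 c2 c3 c4 d1 d2 d3 d4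
  assume h: "A = (a1,a2,a3,a4)" "A' = (b1,b2,b3,b4)" "B = (c1,c2,c3,c4)" "B' = (d1,d2,d3,d4)"
  from assms have "[a1 = b1] (mod m)" "[a2 = b2] (mod m)" "[a3 = b3] (mod m)" "[a4 = b4] (mod m)"
    "[c1 = d1] (mod m)" "[c2 = d2] (mod m)" "[c3 = d3] (mod m)" "[c4 = d4] (mod m)"
    unfolding h mmod_eq_iff by auto
  then show ?thesis unfolding h msc_simp madd_simp mmod_eq_iff
    by (intro conjI cong_add cong_scalar_left) auto
qed

context cset begin

lemma psim_lin: "psim A = madd (msc L A) (msc (-(L-1)) (1,0,0,1))"
  by (cases A) (simp add: psim_def msc_simp madd_simp algebra_simps)

lemma mmul_psim_left: "mmul (psim B) D = madd (msc L (mmul B D)) (msc (-(L-1)) D)"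
  by (cases B; cases D) (simp add: psim_def mmul_simp msc_simp madd_simp algebra_simps)

lemma mmul_psim_right: "mmul D (psim B) = madd (msc L (mmul D B)) (msc (-(L-1)) D)"
  by (cases B; cases D) (simp add: psim_def mmul_simp msc_simp madd_simp algebra_simps)

lemma mmul_psim_mid: "mmul (mmul A (psim B)) D = madd (msc L (mmul (mmul A B) D)) (msc (-(L-1)) (mmul A D))"
  by (cases A; cases B; cases D) (simp add: psim_def mmul_simp msc_simp madd_simp algebra_simps)

lemma lin_cancel: assumes "mmod (L^Suc n) (madd (msc L X) Z) = mmod (L^Suc n) (madd (msc L X') Z)"
  shows "mmod (L^n) X = mmod (L^n) X'"
proof (cases X; cases X'; cases Z)
  fix a1 a2 a3 a4 b1 b2 b3 b4 c1 c2 c3 c4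
  assume h: "X = (a1,a2,a3,a4)" "X' = (b1,b2,b3,b4)" "Z = (c1,c2,c3,c4)"
  have q: "[L * x + z = L * y + z] (mod L^Suc n) \<Longrightarrow> [x = y] (mod L^n)" for x y z
    by (rule cong_divL) (simp add: cong_add_rcancel)
  from assms show ?thesis unfolding h msc_simp madd_simp mmod_eq_iff using q by blast
qed

lemma psi_one: assumes M: "M \<in> Zl_mats l" shows "psi M 1 = (1,0,0,1)"
proof -
  have "psi M 1 = mmod L (psim (M 1))" unfolding psi_def by simp
  also have "\<dots> = (1,0,0,1)" using l2 by (cases "M 1") (simp add: psim_def mmod_simp)
  finally show ?thesis .
qed

lemma GL2_of_one: assumes M: "M \<in> Zl_mats l" and "M 1 = (1,0,0,1)" shows "M \<in> GL2 l"
  using GL2_of_coprime[OF prime M] assms(2) by (simp add: det4_def)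

lemma psi_GL2: "M \<in> Zl_mats l \<Longrightarrow> psi M \<in> GL2 l"
  using GL2_of_one psi_Z psi_one by blast

lemma conj_psi: assumes X: "X \<in> Zl_mats l" shows "conj (psi X) = psi (conj X)"
proof
  fix n
  have "conj (psi X) n = mmod (L^n) (mmul (mmul (P n) (psim (X n))) (Pinv n))"
    unfolding conj_level psi_def by (simp add: mmod_mid)
  also have "\<dots> = mmod (L^n) (madd (msc L (mmul (mmul (P n) (X n)) (Pinv n))) (msc (-(L-1)) (mmul (P n) (Pinv n))))"
    unfolding mmul_psim_mid ..
  also have "\<dots> = mmod (L^n) (madd (msc L (conj X n)) (msc (-(L-1)) (1,0,0,1)))"
  proof (rule mmod_lin_cong)
    show "mmod (L^n) (mmul (mmul (P n) (X n)) (Pinv n)) = mmod (L^n) (conj X n)"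
      unfolding conj_level by simp
    have "mmod (L^n) (mmul (P n) (Pinv n)) = lmult l P Pinv n" unfolding lmult_def ..
    also have "\<dots> = mmod (L^n) (1,0,0,1)" using Pinv_prop(2) unfolding lone_def by simp
    finally show "mmod (L^n) (mmul (P n) (Pinv n)) = mmod (L^n) (1,0,0,1)" .
  qed
  also have "\<dots> = psi (conj X) n" unfolding psi_def psim_lin ..
  finally show "conj (psi X) n = psi (conj X) n" .
qed

lemma comW_psi: assumes Y: "Y \<in> Zl_mats l" shows "comW (psi Y) \<longleftrightarrow> comW Y"
proof -
  have lv: "lmult l (psi Y) W n = mmod (L^n) (madd (msc L (mmul (Y n) (W n))) (msc (-(L-1)) (W n)))"
       "lmult l W (psi Y) n = mmod (L^n) (madd (msc L (mmul (W n) (Y n))) (msc (-(L-1)) (W n)))" for n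
    unfolding lmult_def psi_def by (simp_all add: mmod_mmul_left mmod_mmul_right mmul_psim_left mmul_psim_right)
  show ?thesis
  proof
    assume cw: "comW (psi Y)"
    show "comW Y" unfolding comW_def
    proof
      fix n
      have "mmod (L^Suc n) (madd (msc L (mmul (Y (Suc n)) (W (Suc n)))) (msc (-(L-1)) (W (Suc n))))
          = mmod (L^Suc n) (madd (msc L (mmul (W (Suc n)) (Y (Suc n)))) (msc (-(L-1)) (W (Suc n))))"
        using cw unfolding comW_def lv[symmetric] by simp
      then have e: "mmod (L^n) (mmul (Y (Suc n)) (W (Suc n))) = mmod (L^n) (mmul (W (Suc n)) (Y (Suc n)))"
        by (rule lin_cancel)
      have "lmult l Y W n = mmod (L^n) (mmul (Y (Suc n)) (W (Suc n)))"
        unfolding lmult_def Zl_matsD[OF Y, of n] Zl_matsD[OF W_Z, of n] by (simp add: mmod_mmul_left mmod_mmul_right)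
      also have "\<dots> = mmod (L^n) (mmul (W (Suc n)) (Y (Suc n)))" by (rule e)
      also have "\<dots> = lmult l W Y n"
        unfolding lmult_def Zl_matsD[OF Y, of n] Zl_matsD[OF W_Z, of n] by (simp add: mmod_mmul_left mmod_mmul_right)
      finally show "lmult l Y W n = lmult l W Y n" .
    qed
  next
    assume cw: "comW Y"
    show "comW (psi Y)" unfolding comW_def
    proof
      fix n
      have e: "mmod (L^n) (mmul (Y n) (W n)) = mmod (L^n) (mmul (W n) (Y n))"
        using cw unfolding comW_def lmult_def by meson
      show "lmult l (psi Y) W n = lmult l W (psi Y) n"
        unfolding lv by (rule mmod_lin_cong[OF e refl])
    qed
  qed
qed

lemma psi_C: assumes M: "M \<in> C" shows "psi M \<in> C"
proof -
  have MZ: "M \<in> Zl_mats l" by (rule C_Z[OF M])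
  have "comW (conj M)" using M C_iff by blast
  then have "comW (psi (conj M))" using comW_psi[OF conj_Z[OF MZ]] by simp
  then have "comW (conj (psi M))" using conj_psi[OF MZ] by simp
  then show ?thesis unfolding C_iff using psi_GL2[OF MZ] by simp
qed

lemma psim_inj: assumes "mmod (L^Suc n) (psim A) = mmod (L^Suc n) (psim B)"
  shows "mmod (L^n) A = mmod (L^n) B"
  using assms unfolding psim_lin by (rule lin_cancel)

lemma psi_inj: assumes "X \<in> Zl_mats l" "Y \<in> Zl_mats l" "psi X = psi Y" shows "X = Y"
proof
  fix n
  have "mmod (L^Suc n) (psim (X n)) = mmod (L^Suc n) (psim (Y n))"
    using assms(3) psi_level[OF assms(1), of n] psi_level[OF assms(2), of n] by simp
  then have "mmod (L^n) (X n) = mmod (L^n) (Y n)" by (rule psim_inj)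
  then show "X n = Y n" using Zl_mats_norm[OF assms(1)] Zl_mats_norm[OF assms(2)] by simp
qed

lemma psi_K: assumes M: "M \<in> Zl_mats l" and a: "a \<ge> 1" and Ma: "M a = lone l a"
  shows "psi M (Suc a) = lone l (Suc a)"
proof -
  have "psi M (Suc a) = mmod (L^Suc a) (psim (1,0,0,1))" using psi_level[OF M] Ma lone_n a by simp
  then show ?thesis unfolding lone_def psim_def by simp
qed

end


context cset begin

definition phim :: "mat4 \<Rightarrow> mat4" where
  "phim = (\<lambda>(a,b,c,e). (1 + (a - 1) div L, b div L, c div L, 1 + (e - 1) div L))"

definition phi :: "ladic_mat \<Rightarrow> ladic_mat" where
  "phi N = (\<lambda>n. mmod (L^n) (phim (N (Suc n))))"

definition ione :: "mat4 \<Rightarrow> bool" where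
  "ione A \<longleftrightarrow> (case A of (a,b,c,e) \<Rightarrow> L dvd (a - 1) \<and> L dvd b \<and> L dvd c \<and> L dvd (e - 1))"

lemma ione_of: assumes N: "N \<in> Zl_mats l" and N1: "N 1 = (1,0,0,1)" and n: "n \<ge> 1" shows "ione (N n)"
proof -
  obtain a b c e where Nn: "N n = (a,b,c,e)" by (cases "N n")
  have "N 1 = mmod (L^1) (N n)" using Zl_mats_le[OF N n] .
  then have m: "a mod L = 1" "b mod L = 0" "c mod L = 0" "e mod L = 0 + 1" using N1 Nn by (simp_all add: mmod_simp)
  have l1: "1 mod L = 1" using l2 by simp
  have "[a = 1] (mod L)" "[e = 1] (mod L)" using m l1 unfolding cong_def by simp_all
  then have "L dvd a - 1" "L dvd e - 1" by (simp_all add: cong_iff_dvd_diff)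
  moreover have "L dvd b" "L dvd c" using m by (simp_all add: dvd_eq_mod_eq_0)
  ultimately show ?thesis unfolding ione_def Nn by simp
qed

lemma psim_phim: "ione A \<Longrightarrow> psim (phim A) = A"
  unfolding ione_def psim_def phim_def by (cases A) auto

lemma divcong: assumes "L dvd u" "L dvd v" "[u = v] (mod L^Suc n)" shows "[u div L = v div L] (mod L^n)"
proof -
  obtain u' v' where uv: "u = L * u'" "v = L * v'" using assms(1,2) by (meson dvdE)
  have "L \<noteq> 0" using l2 by simp
  then show ?thesis using assms(3) unfolding uv by (simp add: cong_divL)
qed

lemma phim_cong: assumes "ione A" "ione B" "mmod (L^Suc n) A = mmod (L^Suc n) B"
  shows "mmod (L^n) (phim A) = mmod (L^n) (phim B)"
proof (cases A; cases B)
  fix a b c e a' b' c' e' assume A: "A = (a,b,c,e)" and B: "B = (a',b',c',e')"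
  from assms(3) have h: "[a = a'] (mod L^Suc n)" "[b = b'] (mod L^Suc n)" "[c = c'] (mod L^Suc n)" "[e = e'] (mod L^Suc n)"
    unfolding A B mmod_eq_iff by auto
  have h1: "[a - 1 = a' - 1] (mod L^Suc n)" "[e - 1 = e' - 1] (mod L^Suc n)" using h by (auto intro: cong_diff)
  have d: "L dvd (a - 1)" "L dvd b" "L dvd c" "L dvd (e - 1)" "L dvd (a' - 1)" "L dvd b'" "L dvd c'" "L dvd (e' - 1)"
    using assms(1,2) unfolding A B ione_def by auto
  have "[(a - 1) div L = (a' - 1) div L] (mod L^n)" "[b div L = b' div L] (mod L^n)"
    "[c div L = c' div L] (mod L^n)" "[(e - 1) div L = (e' - 1) div L] (mod L^n)"
    using divcong d h h1 by blast+
  then show ?thesis unfolding A B phim_def split mmod_eq_iff by (intro conjI) (auto intro: cong_add[OF cong_refl])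
qed

lemma phi_Z: assumes N: "N \<in> Zl_mats l" and N1: "N 1 = (1,0,0,1)" shows "phi N \<in> Zl_mats l"
  unfolding Zl_mats_def
proof (intro CollectI allI)
  fix n
  have "mmod (L^n) (phi N (Suc n)) = mmod (L^n) (phim (N (Suc (Suc n))))"
    unfolding phi_def by (rule mmod_dvd) simp
  also have "\<dots> = mmod (L^n) (phim (N (Suc n)))"
    using phim_cong[OF ione_of[OF N N1, of "Suc (Suc n)"] ione_of[OF N N1, of "Suc n"], of n]
      Zl_matsD[OF N, of "Suc n"] Zl_mats_norm[OF N, of "Suc n"] by simp
  finally show "phi N n = mmod (L^n) (phi N (Suc n))" unfolding phi_def by simp
qed

lemma psi_phi: assumes N: "N \<in> Zl_mats l" and N1: "N 1 = (1,0,0,1)" shows "psi (phi N) = N"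
proof
  fix n
  have "psi (phi N) n = mmod (L^n) (psim (mmod (L^n) (phim (N (Suc n)))))" unfolding psi_def phi_def ..
  also have "\<dots> = mmod (L^n) (mmod (L^Suc n) (psim (mmod (L^n) (phim (N (Suc n))))))"
    by (rule mmod_dvd[symmetric]) simp
  also have "\<dots> = mmod (L^n) (mmod (L^Suc n) (psim (phim (N (Suc n)))))"
    using psim_cong[of n "mmod (L^n) (phim (N (Suc n)))" "phim (N (Suc n))"] by simp
  also have "\<dots> = mmod (L^n) (N (Suc n))" using psim_phim[OF ione_of[OF N N1, of "Suc n"]] by (simp add: mmod_dvd)
  also have "\<dots> = N n" using Zl_matsD[OF N, of n] by simp
  finally show "psi (phi N) n = N n" .
qed

lemma phi_K: assumes a: "a \<ge> 1" and Na: "N (Suc a) = lone l (Suc a)"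
  shows "phi N a = lone l a"
  using Na lone_n[of "Suc a"] unfolding phi_def lone_def by (simp add: phim_def)

lemma phi_one: assumes "N 2 = (1,0,0,1)" shows "phi N 1 = (1,0,0,1)"
  using assms l2 unfolding phi_def by (simp add: phim_def mmod_simp numeral_2_eq_2)

lemma phi_C: assumes NC: "N \<in> C" and N1: "N 1 = (1,0,0,1)" and N2: "N 2 = (1,0,0,1)"
  shows "phi N \<in> C"
proof -
  have NZ: "N \<in> Zl_mats l" by (rule C_Z[OF NC])
  define M where "M = phi N"
  have MZ: "M \<in> Zl_mats l" unfolding M_def by (rule phi_Z[OF NZ N1])
  have pM: "psi M = N" unfolding M_def by (rule psi_phi[OF NZ N1])
  have "phi N 1 = (1,0,0,1)" by (rule phi_one[of N]) (rule N2)
  then have g: "M \<in> GL2 l" using GL2_of_one[OF MZ] unfolding M_def by simp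
  have "comW (conj N)" using NC C_iff by blast
  then have "comW (psi (conj M))" using conj_psi[OF MZ] pM by simp
  then have "comW (conj M)" using comW_psi[OF conj_Z[OF MZ]] by simp
  then show ?thesis unfolding C_iff M_def[symmetric] using g by simp
qed

end


context cset begin

abbreviation "n0 \<equiv> level l C G"

lemma K_mono: assumes "j \<le> j'" shows "K j' \<subseteq> K j"
proof
  fix N assume "N \<in> K j'"
  then have N: "N \<in> C" "N j' = lone l j'" unfolding K_def by auto
  have "N j = mmod (L^j) (N j')" using Zl_mats_le[OF C_Z[OF N(1)] assms] .
  also have "\<dots> = lone l j" unfolding N(2) using Zl_mats_le[OF lone_closed assms] by simp
  finally show "N \<in> K j" unfolding K_def using N by simp
qed

lemma K_G: "j \<ge> n0 \<Longrightarrow> K j \<subseteq> G" using K_mono n0_facts(2) by blast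

lemma Mab_eq: "Mab l G a b = {M \<in> G. ker_group l M \<cong> Prd a (a+b)}"
  unfolding Mab_def Prd_def ..

lemma Mab_IB: assumes a: "a \<ge> 1" and M: "M \<in> Mab l G a b"
  shows "M \<in> G" "\<exists>k U1 U2 V1 V2. IB a (a+b) k U1 U2 V1 V2 (ker_set l M)" "M a = lone l a"
proof -
  show MG: "M \<in> G" using M unfolding Mab_eq by blast
  have MZ: "M \<in> Zl_mats l" by (rule G_Z[OF MG])
  show ex: "\<exists>k U1 U2 V1 V2. IB a (a+b) k U1 U2 V1 V2 (ker_set l M)"
    using M iso_iff_IB[OF MZ a, of "a+b"] a unfolding Mab_eq by auto
  then obtain k U1 U2 V1 V2 where "IB a (a+b) k U1 U2 V1 V2 (ker_set l M)" by blast
  then have "Dk a \<subseteq> ker_set l M" using IB_Da by simp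
  then show "M a = lone l a" by (rule Da_imp_lone[OF MZ a])
qed

lemma Mab_cyl: assumes a: "a \<ge> 1" and M: "M \<in> Mab l G a b" and M': "M' \<in> G"
  and eq: "M' (Suc (a+b)) = M (Suc (a+b))"
  shows "M' \<in> Mab l G a b"
proof -
  have MG: "M \<in> G" and ex: "\<exists>k U1 U2 V1 V2. IB a (a+b) k U1 U2 V1 V2 (ker_set l M)"
    using Mab_IB[OF a M] by auto
  then obtain k U1 U2 V1 V2 where IB: "IB a (a+b) k U1 U2 V1 V2 (ker_set l M)" by blast
  have D: "ker_set l M \<subseteq> Dk (a+b)" using IB_D[OF IB] by simp
  have "ker_set l M' = ker_set l M" by (rule ker_stable[OF G_Z[OF MG] G_Z[OF M'] eq D])
  then have "ker_group l M' = ker_group l M" unfolding ker_group_def by simp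
  then show ?thesis using M M' unfolding Mab_eq by simp
qed

lemma Mab_union: assumes a: "a \<ge> 1"
  shows "Mab l G a b = (\<Union>A\<in>red (Mab l G a b) (Suc (a+b)). cyl (Suc (a+b)) A)"
proof
  show "Mab l G a b \<subseteq> (\<Union>A\<in>red (Mab l G a b) (Suc (a+b)). cyl (Suc (a+b)) A)"
    unfolding red_def cyl_def using Mab_IB(1)[OF a] by blast
  show "(\<Union>A\<in>red (Mab l G a b) (Suc (a+b)). cyl (Suc (a+b)) A) \<subseteq> Mab l G a b"
  proof
    fix M' assume "M' \<in> (\<Union>A\<in>red (Mab l G a b) (Suc (a+b)). cyl (Suc (a+b)) A)"
    then obtain M where M: "M \<in> Mab l G a b" "M' \<in> G" "M' (Suc (a+b)) = M (Suc (a+b))"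
      unfolding red_def cyl_def by blast
    show "M' \<in> Mab l G a b" by (rule Mab_cyl[OF a M])
  qed
qed

lemma Mab_measure: assumes a: "a \<ge> 1"
  shows "measure \<mu> (Mab l G a b) = card (red (Mab l G a b) (Suc (a+b))) / card (red G (Suc (a+b)))"
proof -
  have sub: "red (Mab l G a b) (Suc (a+b)) \<subseteq> red G (Suc (a+b))"
    unfolding red_def using Mab_IB(1)[OF a] by blast
  show ?thesis using measure_cyls[OF sub] Mab_union[OF a] by simp
qed

lemma Mab_iso_psi: assumes a: "a \<ge> 1" and M: "M \<in> Mab l G a b"
  shows "ker_group l (psi M) \<cong> Prd (Suc a) (Suc a + b)"
proof -
  have MG: "M \<in> G" using Mab_IB[OF a M] by simp
  have MZ: "M \<in> Zl_mats l" by (rule G_Z[OF MG])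
  obtain k U1 U2 V1 V2 where IB: "IB a (a+b) k U1 U2 V1 V2 (ker_set l M)" using Mab_IB(2)[OF a M] by blast
  have IB1: "IB a (a+b) (Suc k) (L*U1) (L*U2) (L*V1) (L*V2) (ker_set l M)" by (rule IB_lift[OF IB])
  have "IB (Suc a) (Suc (a+b)) (Suc (Suc k)) (L*U1) (L*U2) (L*V1) (L*V2) (ker_set l (psi M))"
    by (rule T1[OF MZ a _ _ IB1]) auto
  then show ?thesis using IB_imp_iso by simp
qed

lemma psi_Mab: assumes a: "a \<ge> n0" and M: "M \<in> Mab l G a b"
  shows "psi M \<in> Mab l G (Suc a) b"
proof -
  have a1: "a \<ge> 1" using a n0_facts(1) by simp
  have MG: "M \<in> G" and Ma: "M a = lone l a" using Mab_IB[OF a1 M] by auto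
  have MZ: "M \<in> Zl_mats l" by (rule G_Z[OF MG])
  have "psi M \<in> C" using psi_C G_C MG by blast
  moreover have "psi M (Suc a) = lone l (Suc a)" by (rule psi_K[OF MZ a1 Ma])
  ultimately have "psi M \<in> K (Suc a)" unfolding K_def by simp
  then have "psi M \<in> G" using K_G[of "Suc a"] a by auto
  then show ?thesis unfolding Mab_eq using Mab_iso_psi[OF a1 M] by simp
qed

lemma phi_Mab: assumes a: "a \<ge> n0" and N: "N \<in> Mab l G (Suc a) b"
  shows "phi N \<in> Mab l G a b" "psi (phi N) = N"
proof -
  have a1: "a \<ge> 1" using a n0_facts(1) by simp
  have NG: "N \<in> G" and Na: "N (Suc a) = lone l (Suc a)" using Mab_IB[of "Suc a" N b] N by auto
  have NZ: "N \<in> Zl_mats l" by (rule G_Z[OF NG])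
  have NC: "N \<in> C" using NG G_C by blast
  have N1: "N 1 = (1,0,0,1)" using Zl_mats_le[OF NZ, of 1 "Suc a"] Na lone_n[of "Suc a"] l2 by (simp add: mmod_simp)
  have N2: "N 2 = (1,0,0,1)"
  proof -
    have "N 2 = mmod (L^2) (N (Suc a))" using Zl_mats_le[OF NZ, of 2 "Suc a"] a1 by simp
    moreover have "L^2 > 1" using Lpow_gt1[of 2] by simp
    ultimately show ?thesis using Na lone_n[of "Suc a"] by (simp add: mmod_simp)
  qed
  define M where "M = phi N"
  have MZ: "M \<in> Zl_mats l" unfolding M_def by (rule phi_Z[OF NZ N1])
  have pM: "psi M = N" unfolding M_def by (rule psi_phi[OF NZ N1])
  have MC: "M \<in> C" unfolding M_def by (rule phi_C[OF NC N1 N2])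
  have Ma: "M a = lone l a" unfolding M_def by (rule phi_K[of a N, OF a1 Na])
  have MG: "M \<in> G" using K_G[OF a] MC Ma unfolding K_def by blast
  obtain k U1 U2 V1 V2 where IB: "IB (Suc a) (Suc a + b) k U1 U2 V1 V2 (ker_set l (psi M))"
    using Mab_IB(2)[of "Suc a" N b] N pM by auto
  have IB1: "IB (Suc a) (Suc (a+b)) (Suc k) (L*U1) (L*U2) (L*V1) (L*V2) (ker_set l (psi M))"
    using IB_lift[OF IB] by simp
  have "IB a (a+b) k (L*U1) (L*U2) (L*V1) (L*V2) (ker_set l M)" by (rule T2[OF MZ a1 _ IB1]) simp
  then have "ker_group l M \<cong> Prd a (a+b)" by (rule IB_imp_iso)
  then show "phi N \<in> Mab l G a b" unfolding Mab_eq M_def[symmetric] using MG by simp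
  show "psi (phi N) = N" using pM unfolding M_def .
qed

end


context cset begin

lemma card_step: assumes a: "a \<ge> n0"
  shows "card (red (Mab l G (Suc a) b) (Suc (Suc (a+b)))) = card (red (Mab l G a b) (Suc (a+b)))"
proof -
  have a1: "a \<ge> 1" using a n0_facts(1) by simp
  define N where "N = Suc (a+b)"
  define f where "f A = mmod (L^Suc N) (psim A)" for A
  have img: "f ` red (Mab l G a b) N = red (Mab l G (Suc a) b) (Suc N)"
  proof
    show "f ` red (Mab l G a b) N \<subseteq> red (Mab l G (Suc a) b) (Suc N)"
    proof
      fix B assume "B \<in> f ` red (Mab l G a b) N"
      then obtain M where M: "M \<in> Mab l G a b" "B = f (M N)" unfolding red_def by blast
      have MZ: "M \<in> Zl_mats l" using G_Z Mab_IB(1)[OF a1 M(1)] by blast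
      have "B = psi M (Suc N)" unfolding M(2) f_def psi_level[OF MZ] ..
      then show "B \<in> red (Mab l G (Suc a) b) (Suc N)" using psi_Mab[OF a M(1)] unfolding red_def by blast
    qed
    show "red (Mab l G (Suc a) b) (Suc N) \<subseteq> f ` red (Mab l G a b) N"
    proof
      fix B assume "B \<in> red (Mab l G (Suc a) b) (Suc N)"
      then obtain N' where N': "N' \<in> Mab l G (Suc a) b" "B = N' (Suc N)" unfolding red_def by blast
      define M where "M = phi N'"
      have M: "M \<in> Mab l G a b" "psi M = N'" unfolding M_def using phi_Mab[OF a N'(1)] by auto
      have MZ: "M \<in> Zl_mats l" using G_Z Mab_IB(1)[OF a1 M(1)] by blast
      have "B = f (M N)" unfolding N'(2) M(2)[symmetric] f_def psi_level[OF MZ] ..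
      then show "B \<in> f ` red (Mab l G a b) N" using M(1) unfolding red_def by blast
    qed
  qed
  have inj: "inj_on f (red (Mab l G a b) N)"
  proof
    fix A A' assume A: "A \<in> red (Mab l G a b) N" and A': "A' \<in> red (Mab l G a b) N" and e: "f A = f A'"
    have sub: "red (Mab l G a b) N \<subseteq> red G N" unfolding red_def using Mab_IB(1)[OF a1] by blast
    have "mmod (L^N) A = mmod (L^N) A'" using e unfolding f_def by (rule psim_inj)
    moreover have "mmod (L^N) A = A" using red_norm[of A N] sub A by blast
    moreover have "mmod (L^N) A' = A'" using red_norm[of A' N] sub A' by blast
    ultimately show "A = A'" by simp
  qed
  have "card (red (Mab l G (Suc a) b) (Suc N)) = card (red (Mab l G a b) N)"
    unfolding img[symmetric] by (rule card_image[OF inj])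
  then show ?thesis unfolding N_def by simp
qed

lemma measure_step: assumes a: "a \<ge> n0"
  shows "measure \<mu> (Mab l G (Suc a) b) = measure \<mu> (Mab l G a b) / (real l)^2"
proof -
  have a1: "a \<ge> 1" using a n0_facts(1) by simp
  define N where "N = Suc (a+b)"
  have NG: "K N \<subseteq> G" using K_G[of N] a unfolding N_def by simp
  have cr: "card (red G (Suc N)) = l^2 * card (red G N)" by (rule card_red_Suc[OF _ NG]) (simp add: N_def)
  have m1: "measure \<mu> (Mab l G (Suc a) b) = card (red (Mab l G (Suc a) b) (Suc N)) / card (red G (Suc N))"
    using Mab_measure[of "Suc a" b] unfolding N_def by simp
  have m0: "measure \<mu> (Mab l G a b) = card (red (Mab l G a b) N) / card (red G N)"
    using Mab_measure[OF a1, of b] unfolding N_def by simp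
  have cs: "card (red (Mab l G (Suc a) b) (Suc N)) = card (red (Mab l G a b) N)"
    using card_step[OF a, of b] unfolding N_def by simp
  show ?thesis unfolding m1 m0 cs cr by simp
qed

lemma measure_main: "measure \<mu> (Mab l G (n0 + k) b) = measure \<mu> (Mab l G n0 b) / real l ^ (2 * k)"
proof (induction k)
  case 0 then show ?case by simp
next
  case (Suc k)
  have "measure \<mu> (Mab l G (n0 + Suc k) b) = measure \<mu> (Mab l G (n0 + k) b) / (real l)^2"
    using measure_step[of "n0 + k" b] by simp
  also have "\<dots> = measure \<mu> (Mab l G n0 b) / real l ^ (2 * k) / (real l)^2" using Suc by simp
  also have "\<dots> = measure \<mu> (Mab l G n0 b) / real l ^ (2 * Suc k)"
    by (simp add: power_add power_mult field_simps power2_eq_square)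
  finally show ?case .
qed

end

theorem lemma18:
  fixes l :: nat and C G :: "ladic_mat set" and \<mu> :: "ladic_mat measure" and a b :: nat
  assumes "prime l"
    and "cartan l C"
    and "is_subgroup l G C"
    and "open_in_ladic G C"
    and "haar_prob l G \<mu>"
    and "a \<ge> level l C G"
  shows "measure \<mu> (Mab l G a b) =
           measure \<mu> (Mab l G (level l C G) b) / real l ^ (2 * (a - level l C G))"
proof -
  obtain t d P where t: "t \<in> Zl l" and d: "d \<in> Zl l" and P: "P \<in> GL2 l"
    and Cd: "C = {M \<in> GL2 l. \<exists>x \<in> Zl l. \<exists>y \<in> Zl l. lmult l P M = lmult l (quad_elt l t d x y) P}"
    using assms(2) unfolding cartan_def by blast
  interpret cset l t d P C G \<mu>
    by (unfold_locales) (use assms t d P Cd in auto)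
  have "a = level l C G + (a - level l C G)" using assms(6) by simp
  then have "measure \<mu> (Mab l G a b) = measure \<mu> (Mab l G (level l C G + (a - level l C G)) b)" by simp
  also have "\<dots> = measure \<mu> (Mab l G (level l C G) b) / real l ^ (2 * (a - level l C G))"
    by (rule measure_main)
  finally show ?thesis .
qed


end
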